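(* Let $(t_i)_{i\ge1}$ be a strictly increasing sequence in $2\mathbb N$, set $t_0:=0$ and $\zeta_N:=\max\{k\ge0:t_k\le N\}$, and suppose $\zeta_N/N\to0$ as $N\to\infty$. Then for every $\lambda\ge0$, $h\ge0$, $$\lim_{N\to\infty,\,N\in2\mathbb N}\frac1N\log\widehat Z^{\{t_i\},\lambda,h}_{N,\omega}(0)=\textsc{f}(\lambda,h)$$ both $\mathbb P$-almost surely and in $L^1(\mathbb P)$, where $$\widehat Z^{\{t_i\},\lambda,h}_{N,\omega}(0):=\mathbf E\Big[e^{-2\lambda\sum_{n=1}^N(\omega_n+h)\Delta_n};\ S_{t_1}=0,\dots,S_{t_{\zeta_N}}=0,\ S_N=0\Big].$$
   Context: Let $S=(S_n)_{n\ge 0}$ be the simple symmetric random walk on $\mathbb Z$ with $S_0=0$ (law $\mathbf P$, expectation $\mathbf E$). Let $\omega=(\omega_n)_{n\ge1}$ be i.i.d. real random variables, independent of $S$, with law $\mathbb P$, such that $\mathbb E[e^{\alpha\omega_1}]<\infty$ for all $\alpha\in\mathbb R$, $\mathbb E[\omega_1]=0$, $\mathbb E[\omega_1^2]=1$. Sign convention: $\mathrm{sign}(S_n)$ is the usual sign when $S_n\neq0$, and if $S_{2n}=0$ one sets $\mathrm{sign}(S_{2n}):=\mathrm{sign}(S_{2n-1})$. Put $\Delta_n:=(1-\mathrm{sign}(S_n))/2$. For $N\in2\mathbb N$: $Z^{\lambda,h}_{N,\omega}(0):=\mathbf E\big[\exp\big(-2\lambda\sum_{n=1}^N(\omega_n+h)\Delta_n\big);\,S_N=0\big]$.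 It is known that $\textsc{f}(\lambda,h):=\lim_{N\in2\mathbb N}\frac1N\log Z^{\lambda,h}_{N,\omega}(0)$ exists a.s. and in $L^1(\mathbb P)$ and is non-random (it is the free energy). *)

theory Defs
  imports "HOL-Probability.Probability"
begin

text \<open>Simple random walk paths of length N, encoded by their list of increments in {-1,1}.
  Each path has probability 2^(-N).\<close>
definition srw_paths :: "nat \<Rightarrow> int list set" where
  "srw_paths N = {xs. length xs = N \<and> set xs \<subseteq> {-1, 1}}"

definition srw_pos :: "int list \<Rightarrow> nat \<Rightarrow> int" where
  "srw_pos xs n = sum_list (take n xs)"

text \<open>Delta_n = (1 - sign(S_n))/2, with sign(S_n) := sign(S_(n-1)) when S_n = 0 (n \<ge> 1).\<close>
definition srw_Delta :: "int list \<Rightarrow> nat \<Rightarrow> real" where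
  "srw_Delta xs n =
     (if srw_pos xs n < 0 then 1
      else if srw_pos xs n = 0 \<and> srw_pos xs (n - 1) < 0 then 1 else 0)"

definition copolymer_weight :: "real \<Rightarrow> real \<Rightarrow> (nat \<Rightarrow> real) \<Rightarrow> nat \<Rightarrow> int list \<Rightarrow> real" where
  "copolymer_weight lam h w N xs = exp (- 2 * lam * (\<Sum>n = 1..N. (w n + h) * srw_Delta xs n))"

definition Z_pinned :: "real \<Rightarrow> real \<Rightarrow> (nat \<Rightarrow> real) \<Rightarrow> nat \<Rightarrow> real" where
  "Z_pinned lam h w N =
     (\<Sum>xs \<in> {xs \<in> srw_paths N. srw_pos xs N = 0}. copolymer_weight lam h w N xs) / 2 ^ N"

definition zeta :: "(nat \<Rightarrow> nat) \<Rightarrow> nat \<Rightarrow> nat" where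
  "zeta t N = Max {k. t k \<le> N}"

definition Z_hat :: "(nat \<Rightarrow> nat) \<Rightarrow> real \<Rightarrow> real \<Rightarrow> (nat \<Rightarrow> real) \<Rightarrow> nat \<Rightarrow> real" where
  "Z_hat t lam h w N =
     (\<Sum>xs \<in> {xs \<in> srw_paths N. (\<forall>k \<in> {1..zeta t N}. srw_pos xs (t k) = 0) \<and> srw_pos xs N = 0}.
        copolymer_weight lam h w N xs) / 2 ^ N"

end

theory Submission
  imports Defs
begin

lemma srw_paths_finite: "finite (srw_paths L)"
proof -
  have "srw_paths L = {xs. set xs \<subseteq> {-1,1} \<and> length xs = L}"
    unfolding srw_paths_def by auto
  thus ?thesis using finite_lists_length_eq[of "{-1,1::int}" L] by simp
qed

lemma srw_paths_0: "srw_paths 0 = {[]}"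
  unfolding srw_paths_def by auto

lemma srw_paths_Suc: "srw_paths (Suc L) = Cons 1 ` srw_paths L \<union> Cons (-1) ` srw_paths L"
proof
  show "srw_paths (Suc L) \<subseteq> Cons 1 ` srw_paths L \<union> Cons (-1) ` srw_paths L"
  proof
    fix xs assume "xs \<in> srw_paths (Suc L)"
    then obtain s ys where xs: "xs = s # ys" and "length ys = L" and "s \<in> {-1,1}" and "set ys \<subseteq> {-1,1}"
      unfolding srw_paths_def by (cases xs) auto
    thus "xs \<in> Cons 1 ` srw_paths L \<union> Cons (-1) ` srw_paths L"
      unfolding srw_paths_def by auto
  qed
qed (auto simp: srw_paths_def)

lemma srw_pos_0[simp]: "srw_pos xs 0 = 0"
  by (simp add: srw_pos_def)

lemma srw_pos_Cons_Suc[simp]: "srw_pos (s#xs) (Suc j) = s + srw_pos xs j"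
  by (simp add: srw_pos_def)

lemma srw_pos_full: "length xs \<le> n \<Longrightarrow> srw_pos xs n = sum_list xs"
  by (simp add: srw_pos_def)

lemma srw_pos_append:
  "srw_pos (p @ q) n = (if n \<le> length p then srw_pos p n else sum_list p + srw_pos q (n - length p))"
  by (simp add: srw_pos_def)

lemma srw_pos_drop: "srw_pos (drop a xs) j = srw_pos xs (a + j) - srw_pos xs a"
proof -
  have "take (a + j) xs = take a xs @ take j (drop a xs)" by (simp add: take_add)
  thus ?thesis by (simp add: srw_pos_def)
qed

lemma srw_pos_take: "n \<le> a \<Longrightarrow> srw_pos (take a xs) n = srw_pos xs n"
  by (simp add: srw_pos_def min_def)

lemma paths_sum_bound: "xs \<in> srw_paths L \<Longrightarrow> \<bar>sum_list xs\<bar> \<le> int L"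
proof (induction xs arbitrary: L)
  case Nil thus ?case by (simp add: srw_paths_def)
next
  case (Cons s xs)
  then obtain L' where L: "L = Suc L'" "xs \<in> srw_paths L'" "s \<in> {-1,1}"
    unfolding srw_paths_def by auto
  with Cons.IH[of L'] show ?case by auto
qed

lemma paths_sum_parity: "xs \<in> srw_paths L \<Longrightarrow> even (int L + sum_list xs)"
proof (induction xs arbitrary: L)
  case Nil thus ?case by (simp add: srw_paths_def)
next
  case (Cons s xs)
  then obtain L' where L: "L = Suc L'" "xs \<in> srw_paths L'" "s \<in> {-1,1}"
    unfolding srw_paths_def by auto
  with Cons.IH[of L'] show ?case by auto
qed

lemma take_in_paths: "xs \<in> srw_paths L \<Longrightarrow> n \<le> L \<Longrightarrow> take n xs \<in> srw_paths n"
  unfolding srw_paths_def using set_take_subset[of n xs] by auto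

lemma drop_in_paths: "xs \<in> srw_paths L \<Longrightarrow> drop n xs \<in> srw_paths (L - n)"
  unfolding srw_paths_def using set_drop_subset[of n xs] by auto

lemma pos_zero_even: "xs \<in> srw_paths L \<Longrightarrow> n \<le> L \<Longrightarrow> srw_pos xs n = 0 \<Longrightarrow> even n"
  using paths_sum_parity[OF take_in_paths[of xs L n]] by (simp add: srw_pos_def)

definition cnt :: "nat \<Rightarrow> int \<Rightarrow> nat" where
  "cnt L z = card {xs \<in> srw_paths L. sum_list xs = z}"

lemma cnt_0: "cnt 0 z = (if z = 0 then 1 else 0)"
proof -
  have "{xs \<in> srw_paths 0. sum_list xs = z} = (if z = 0 then {[]} else {})"
    by (auto simp: srw_paths_0)
  thus ?thesis unfolding cnt_def by simp
qed

lemma cnt_Suc: "cnt (Suc L) z = cnt L (z-1) + cnt L (z+1)"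
proof -
  have "{xs \<in> srw_paths (Suc L). sum_list xs = z} =
     Cons 1 ` {xs \<in> srw_paths L. sum_list xs = z - 1} \<union> Cons (-1) ` {xs \<in> srw_paths L. sum_list xs = z + 1}"
    by (auto simp: srw_paths_Suc)
  moreover have "card (Cons 1 ` {xs \<in> srw_paths L. sum_list xs = z - 1} \<union> Cons (-1) ` {xs \<in> srw_paths L. sum_list xs = z + 1})
     = card (Cons 1 ` {xs \<in> srw_paths L. sum_list xs = z - 1}) + card (Cons (-1) ` {xs \<in> srw_paths L. sum_list xs = z + 1})"
    by (rule card_Un_disjoint) (auto intro: finite_subset[OF _ srw_paths_finite])
  moreover have "card (Cons (1::int) ` {xs \<in> srw_paths L. sum_list xs = z - 1}) = cnt L (z-1)"
    unfolding cnt_def by (rule card_image) (simp add: inj_on_def)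
  moreover have "card (Cons (-1::int) ` {xs \<in> srw_paths L. sum_list xs = z + 1}) = cnt L (z+1)"
    unfolding cnt_def by (rule card_image) (simp add: inj_on_def)
  ultimately show ?thesis unfolding cnt_def by simp
qed

lemma cnt_out: "\<bar>z\<bar> > int L \<Longrightarrow> cnt L z = 0"
proof -
  assume "\<bar>z\<bar> > int L"
  hence E: "{xs \<in> srw_paths L. sum_list xs = z} = {}" using paths_sum_bound by fastforce
  show ?thesis unfolding cnt_def by (simp only: E card.empty)
qed

lemma cnt_binom: "cnt L (2 * int k - int L) = L choose k"
proof (induction L arbitrary: k)
  case 0 thus ?case by (cases k) (auto simp: cnt_0)
next
  case (Suc L)
  show ?case
  proof (cases k)
    case 0
    have "cnt L (2 * int k - int (Suc L) - 1) = 0" using 0 by (intro cnt_out) simp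
    moreover have "cnt L (2 * int k - int (Suc L) + 1) = 1" using Suc.IH[of 0] 0 by simp
    ultimately show ?thesis using 0 by (simp add: cnt_Suc)
  next
    case (Suc k')
    have h1: "2 * int k - int (Suc L) - 1 = 2 * int k' - int L" using Suc by simp
    have h2: "2 * int k - int (Suc L) + 1 = 2 * int k - int L" by simp
    have "cnt (Suc L) (2 * int k - int (Suc L)) = cnt L (2 * int k' - int L) + cnt L (2 * int k - int L)"
      by (subst cnt_Suc, simp only: h1 h2)
    then show ?thesis using Suc.IH[of k'] Suc.IH[of k] Suc by simp
  qed
qed

definition nn :: "nat \<Rightarrow> int \<Rightarrow> int \<Rightarrow> int list set" where
  "nn L x y = {d \<in> srw_paths L. (\<forall>j\<le>L. 0 \<le> x + srw_pos d j) \<and> x + sum_list d = y}"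

lemma nn_finite: "finite (nn L x y)"
  unfolding nn_def using srw_paths_finite by simp

lemma nn_Suc_neg: "nn (Suc L) (-1) y = {}"
  unfolding nn_def by force

lemma nn_Suc:
  assumes "x \<ge> 0"
  shows "nn (Suc L) x y = Cons 1 ` nn L (x+1) y \<union> Cons (-1) ` nn L (x-1) y"
proof
  show "nn (Suc L) x y \<subseteq> Cons 1 ` nn L (x+1) y \<union> Cons (-1) ` nn L (x-1) y"
  proof
    fix d assume d: "d \<in> nn (Suc L) x y"
    then obtain s d' where dd: "d = s # d'" "s \<in> {-1,1}" "d' \<in> srw_paths L"
      unfolding nn_def srw_paths_Suc by auto
    have "\<forall>j\<le>L. 0 \<le> (x + s) + srw_pos d' j"
    proof (intro allI impI)
      fix j assume "j \<le> L"
      hence "0 \<le> x + srw_pos d (Suc j)" using d unfolding nn_def by auto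
      thus "0 \<le> (x + s) + srw_pos d' j" using dd by simp
    qed
    moreover have "(x + s) + sum_list d' = y" using d dd unfolding nn_def by simp
    ultimately show "d \<in> Cons 1 ` nn L (x+1) y \<union> Cons (-1) ` nn L (x-1) y"
      using dd unfolding nn_def by auto
  qed
next
  have A: "s # d' \<in> nn (Suc L) x y" if "s \<in> {-1,1}" "d' \<in> nn L (x+s) y" for s d'
  proof -
    have "\<forall>j\<le>Suc L. 0 \<le> x + srw_pos (s # d') j"
    proof (intro allI impI)
      fix j assume "j \<le> Suc L"
      thus "0 \<le> x + srw_pos (s # d') j"
        using that assms unfolding nn_def by (cases j) auto
    qed
    thus ?thesis using that unfolding nn_def srw_paths_def by auto
  qed
  show "Cons 1 ` nn L (x+1) y \<union> Cons (-1) ` nn L (x-1) y \<subseteq> nn (Suc L) x y"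
    using A[of 1] A[of "-1"] by auto
qed

lemma nn_formula:
  "x \<ge> -1 \<Longrightarrow> y \<ge> 0 \<Longrightarrow> int (card (nn L x y)) = int (cnt L (y - x)) - int (cnt L (y + x + 2))"
proof (induction L arbitrary: x)
  case 0
  have "nn 0 x y = (if x \<ge> 0 \<and> x = y then {[]} else {})"
    unfolding nn_def srw_paths_0 by auto
  thus ?case using 0 by (auto simp: cnt_0)
next
  case (Suc L)
  show ?case
  proof (cases "x = -1")
    case True thus ?thesis by (simp add: nn_Suc_neg add.commute)
  next
    case False
    hence x0: "x \<ge> 0" using Suc.prems by simp
    have "card (nn (Suc L) x y) = card (Cons 1 ` nn L (x+1) y) + card (Cons (-1) ` nn L (x-1) y)"
      unfolding nn_Suc[OF x0] by (rule card_Un_disjoint) (auto intro: nn_finite)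
    also have "\<dots> = card (nn L (x+1) y) + card (nn L (x-1) y)"
      by (simp add: card_image inj_on_def)
    finally have "int (card (nn (Suc L) x y)) = int (card (nn L (x+1) y)) + int (card (nn L (x-1) y))"
      by simp
    also have "\<dots> = int (cnt L (y - (x+1))) - int (cnt L (y + (x+1) + 2))
                    + (int (cnt L (y - (x-1))) - int (cnt L (y + (x-1) + 2)))"
      using Suc.IH[of "x+1"] Suc.IH[of "x-1"] Suc.prems x0 by simp
    also have "\<dots> = int (cnt (Suc L) (y - x)) - int (cnt (Suc L) (y + x + 2))"
      by (simp add: cnt_Suc algebra_simps)
    finally show ?thesis .
  qed
qed

definition Dy :: "nat \<Rightarrow> nat" where "Dy j = card (nn (2*j) 0 0)"

lemma Dy_binom: "int (Dy j) = int ((2*j) choose j) - int ((2*j) choose (j+1))"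
proof -
  have "int (Dy j) = int (cnt (2*j) 0) - int (cnt (2*j) 2)"
    unfolding Dy_def using nn_formula[of 0 0 "2*j"] by simp
  moreover have "cnt (2*j) 0 = (2*j) choose j" using cnt_binom[of "2*j" j] by simp
  moreover have "cnt (2*j) 2 = (2*j) choose (j+1)" using cnt_binom[of "2*j" "j+1"] by simp
  ultimately show ?thesis by simp
qed

lemma Dy_mult: "(j+1) * Dy j = (2*j) choose j"
proof -
  have b1: "Suc j * ((2*j) choose Suc j) = 2*j * ((2*j - 1) choose j)"
    by (rule binomial_absorption)
  have b2: "(2*j - j) * ((2*j) choose j) = 2*j * ((2*j - 1) choose j)"
    by (rule binomial_absorb_comp)
  have a: "Suc j * ((2*j) choose Suc j) = (2*j - j) * ((2*j) choose j)"
    by (simp only: b1 b2)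
  have "int ((j+1) * Dy j) = int (j+1) * (int ((2*j) choose j) - int ((2*j) choose (j+1)))"
    by (simp only: of_nat_mult Dy_binom)
  also have "\<dots> = int (j+1) * int ((2*j) choose j) - int (Suc j * ((2*j) choose Suc j))"
    by (simp add: algebra_simps)
  also have "\<dots> = int ((2*j) choose j)" unfolding a by (simp add: algebra_simps)
  finally show ?thesis by linarith
qed

lemma aux_cancel:
  fixes j B0 B1 B1' B2 :: nat
  assumes "(j+1) * B2 = (2*j+2) * B1'" "B1' = B1" "(j+1) * B1 = (2*j+1) * B0"
  shows "(j+1) * B2 = 2*(2*j+1) * B0"
proof -
  have "(j+1) * ((j+1) * B2) = (j+1) * (2*(2*j+1) * B0)"
  proof -
    have "(j+1) * ((j+1) * B2) = (j+1) * ((2*j+2) * B1)" using assms(1,2) by simp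
    also have "\<dots> = (2*j+2) * ((j+1) * B1)" by (simp add: algebra_simps)
    also have "\<dots> = (2*j+2) * ((2*j+1) * B0)" using assms(3) by simp
    also have "\<dots> = (j+1) * (2*(2*j+1) * B0)" by (simp add: algebra_simps)
    finally show ?thesis .
  qed
  thus ?thesis by (subst (asm) nat_mult_eq_cancel1) simp_all
qed

lemma aux_cancel2:
  fixes j A B C D :: nat
  assumes "(j+2) * A = B" "(j+1) * B = 2*(2*j+1) * C" "(j+1) * D = C"
  shows "(j+2) * A = 2*(2*j+1) * D"
proof -
  have "(j+1) * ((j+2) * A) = (j+1) * B" using assms(1) by simp
  also have "\<dots> = 2*(2*j+1) * C" using assms(2) by simp
  also have "\<dots> = 2*(2*j+1) * ((j+1) * D)" using assms(3) by simp
  also have "\<dots> = (j+1) * (2*(2*j+1) * D)" by (simp add: algebra_simps)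
  finally show ?thesis by (subst (asm) nat_mult_eq_cancel1) simp_all
qed

lemma Dy_Suc: "(j+2) * Dy (j+1) = 2*(2*j+1) * Dy j"
proof -
  have e1: "(j+2) * Dy (j+1) = (2*j+2) choose (j+1)" using Dy_mult[of "j+1"]
    by (simp add: algebra_simps del: binomial_Suc_Suc)
  have e2': "Suc j * (Suc (2*j+1) choose Suc j) = Suc (2*j+1) * ((2*j+1) choose j)"
    by (rule Suc_times_binomial)
  have e2: "(j+1) * ((2*j+2) choose (j+1)) = (2*j+2) * ((2*j+1) choose j)"
    using e2' by (simp del: binomial_Suc_Suc)
  have e3: "(2*j+1) choose j = (2*j+1) choose (j+1)"
    using binomial_symmetric[of j "2*j+1"] by simp
  have e4': "Suc j * (Suc (2*j) choose Suc j) = Suc (2*j) * ((2*j) choose j)"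
    by (rule Suc_times_binomial)
  have e4: "(j+1) * ((2*j+1) choose (j+1)) = (2*j+1) * ((2*j) choose j)"
    using e4' by (simp del: binomial_Suc_Suc)
  have e5: "(j+1) * ((2*j+2) choose (j+1)) = 2*(2*j+1) * ((2*j) choose j)"
    by (rule aux_cancel[OF e2 e3 e4])
  show ?thesis by (rule aux_cancel2[OF e1 e5 Dy_mult[of j]])
qed

lemma Dy_le4: "Dy (j+1) \<le> 4 * Dy j"
proof -
  have "(j+2) * Dy (j+1) \<le> (j+2) * (4 * Dy j)"
  proof -
    have "(j+2) * Dy (j+1) = 2*(2*j+1)*Dy j" by (rule Dy_Suc)
    also have "\<dots> \<le> ((j+2)*4) * Dy j" by (intro mult_right_mono) auto
    also have "\<dots> = (j+2)*(4*Dy j)" by (simp only: mult.assoc)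
    finally show ?thesis .
  qed
  thus ?thesis by (subst (asm) mult_le_cancel1) simp
qed

lemma Dy_pow: "Dy (i + n) \<le> 4^n * Dy i"
proof (induction n)
  case (Suc n)
  have "Dy (i + Suc n) \<le> 4 * Dy (i + n)" using Dy_le4[of "i+n"] by simp
  also have "\<dots> \<le> 4 * (4^n * Dy i)" using Suc by simp
  finally show ?case by simp
qed simp

lemma central_lower: "4^j \<le> (2*j+1) * ((2*j) choose j)"
proof -
  have "(4::nat)^j = (\<Sum>k\<le>2*j. (2*j) choose k)"
    by (simp add: choose_row_sum power_mult)
  also have "\<dots> \<le> of_nat (card {..2*j}) * ((2*j) choose j)"
    by (rule sum_bounded_above) (rule binomial_maximum')
  finally show ?thesis by simp
qed

lemma Dy_lower: "4^j \<le> (2*j+1) * (j+1) * Dy j"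
  using central_lower[of j] Dy_mult[of j] by (metis mult.assoc)

lemma Dy_ratio:
  assumes "n \<ge> 1" "m \<ge> 1"
  shows "Dy (n + m - 1) \<le> 8 * n^2 * Dy (n-1) * Dy (m-1)"
proof -
  obtain n' where n: "n = Suc n'" using assms by (cases n) auto
  have "Dy (n + m - 1) = Dy ((m - 1) + n)" using assms by (simp add: algebra_simps)
  also have "\<dots> \<le> 4^n * Dy (m-1)" by (rule Dy_pow)
  also have "4^n * Dy (m-1) = 4 * 4^n' * Dy (m-1)" using n by simp
  also have "\<dots> \<le> 4 * ((2*n'+1) * (n'+1) * Dy n') * Dy (m-1)"
    using Dy_lower[of n'] by (intro mult_right_mono mult_left_mono) auto
  also have "\<dots> \<le> 4 * (2 * n^2 * Dy n') * Dy (m-1)"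
  proof -
    have "(2*n'+1) * (n'+1) \<le> 2 * n^2" using n by (simp add: power2_eq_square algebra_simps)
    thus ?thesis by (intro mult_right_mono mult_left_mono) auto
  qed
  also have "\<dots> = 8 * n^2 * Dy (n-1) * Dy (m-1)" using n by simp
  finally show ?thesis .
qed

lemma sum_prod3:
  fixes F G K :: "_ \<Rightarrow> real"
  shows "(\<Sum>(p,m,q)\<in>A\<times>B\<times>C. F p * G m * K q) = sum F A * sum G B * sum K C"
proof -
  have "(\<Sum>(p,m,q)\<in>A\<times>B\<times>C. F p * G m * K q) = (\<Sum>p\<in>A. \<Sum>m\<in>B. \<Sum>q\<in>C. F p * G m * K q)"
    by (simp only: sum.cartesian_product[symmetric] prod.case)
  also have "\<dots> = (\<Sum>p\<in>A. F p * (\<Sum>m\<in>B. G m * (\<Sum>q\<in>C. K q)))"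
    by (simp add: sum_distrib_left mult.assoc)
  also have "\<dots> = (\<Sum>p\<in>A. F p) * ((\<Sum>m\<in>B. G m) * (\<Sum>q\<in>C. K q))"
    by (simp only: sum_distrib_right[symmetric])
  finally show ?thesis by (simp add: mult.assoc)
qed

lemma sum_prod2:
  fixes F G :: "_ \<Rightarrow> real"
  shows "(\<Sum>(p,m)\<in>A\<times>B. F p * G m) = sum F A * sum G B"
  by (simp add: sum_product sum.cartesian_product)

lemma sum_UN_le:
  fixes f :: "_ \<Rightarrow> real"
  assumes "finite I" "\<And>i. i \<in> I \<Longrightarrow> finite (A i)" "\<And>x. 0 \<le> f x"
  shows "sum f (\<Union>i\<in>I. A i) \<le> (\<Sum>i\<in>I. sum f (A i))"
  using assms
proof (induction I rule: finite_induct)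
  case (insert i I)
  have "sum f (\<Union>j\<in>insert i I. A j) = sum f (A i \<union> (\<Union>j\<in>I. A j))" by simp
  also have "\<dots> \<le> sum f (A i) + sum f (\<Union>j\<in>I. A j)"
  proof -
    have "sum f (A i \<union> (\<Union>j\<in>I. A j)) = sum f (A i) + sum f (\<Union>j\<in>I. A j) - sum f (A i \<inter> (\<Union>j\<in>I. A j))"
      using insert by (subst sum_Un) auto
    moreover have "0 \<le> sum f (A i \<inter> (\<Union>j\<in>I. A j))" using insert by (intro sum_nonneg) auto
    ultimately show ?thesis by simp
  qed
  also have "\<dots> \<le> sum f (A i) + (\<Sum>j\<in>I. sum f (A j))" using insert by simp
  finally show ?case using insert by simp
qed simp

definition excp :: "nat \<Rightarrow> int list set" where
  "excp L = {m \<in> srw_paths L. srw_pos m L = 0 \<and> (\<forall>j. 0 < j \<and> j < L \<longrightarrow> srw_pos m j > 0)}"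

definition excn :: "nat \<Rightarrow> int list set" where
  "excn L = {m \<in> srw_paths L. srw_pos m L = 0 \<and> (\<forall>j. 0 < j \<and> j < L \<longrightarrow> srw_pos m j < 0)}"

lemma excp_finite: "finite (excp L)" unfolding excp_def using srw_paths_finite by simp
lemma excn_finite: "finite (excn L)" unfolding excn_def using srw_paths_finite by simp

lemma pos_step:
  assumes "xs \<in> srw_paths L" "j < L"
  shows "srw_pos xs (Suc j) = srw_pos xs j + xs ! j" "xs ! j \<in> {-1, 1}"
proof -
  have "j < length xs" using assms unfolding srw_paths_def by simp
  thus "srw_pos xs (Suc j) = srw_pos xs j + xs ! j"
    by (simp add: srw_pos_def take_Suc_conv_app_nth)
  have "xs ! j \<in> set xs" using \<open>j < length xs\<close> by (rule nth_mem)
  thus "xs ! j \<in> {-1, 1}" using assms unfolding srw_paths_def by blast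
qed

lemma pos_neg: "srw_pos (map uminus xs) j = - srw_pos xs j"
proof -
  have "sum_list (map uminus ys) = - sum_list ys" for ys :: "int list"
    by (induction ys) auto
  thus ?thesis by (simp add: srw_pos_def take_map)
qed

lemma map_uminus_paths: "xs \<in> srw_paths L \<Longrightarrow> map uminus xs \<in> srw_paths L"
  unfolding srw_paths_def by auto

lemma excn_eq: "excn L = map uminus ` excp L"
proof
  show "map uminus ` excp L \<subseteq> excn L"
    unfolding excp_def excn_def using map_uminus_paths by (auto simp: pos_neg)
  show "excn L \<subseteq> map uminus ` excp L"
  proof
    fix m assume m: "m \<in> excn L"
    have "map uminus m \<in> excp L"
      using m map_uminus_paths unfolding excp_def excn_def by (auto simp: pos_neg)
    moreover have "m = map uminus (map uminus m)" by (simp add: comp_def)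
    ultimately show "m \<in> map uminus ` excp L" by blast
  qed
qed

lemma card_excn: "card (excn L) = card (excp L)"
  unfolding excn_eq by (rule card_image) (simp add: inj_on_def)

lemma excp_SS: "excp (Suc (Suc L)) = (\<lambda>d. 1 # d @ [-1]) ` nn L 0 0"
proof
  show "(\<lambda>d. 1 # d @ [-1]) ` nn L 0 0 \<subseteq> excp (Suc (Suc L))"
  proof
    fix m assume "m \<in> (\<lambda>d. 1 # d @ [-1]) ` nn L 0 0"
    then obtain d where m: "m = 1 # d @ [-1]" and d: "d \<in> nn L 0 0" by auto
    have dl: "length d = L" "set d \<subseteq> {-1,1}" using d unfolding nn_def srw_paths_def by auto
    have "srw_pos m j > 0" if jj: "0 < j" "j < Suc (Suc L)" for j
    proof -
      obtain j' where j: "j = Suc j'" using jj(1) by (cases j) auto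
      have "srw_pos m j = 1 + srw_pos d j'"
        using j jj dl by (simp add: m srw_pos_append)
      moreover have "0 \<le> srw_pos d j'" using d jj j unfolding nn_def by auto
      ultimately show ?thesis by simp
    qed
    moreover have "srw_pos m (Suc (Suc L)) = 0"
      using d dl unfolding nn_def by (simp add: m srw_pos_full)
    moreover have "m \<in> srw_paths (Suc (Suc L))" using dl unfolding m srw_paths_def by auto
    ultimately show "m \<in> excp (Suc (Suc L))" unfolding excp_def by auto
  qed
  show "excp (Suc (Suc L)) \<subseteq> (\<lambda>d. 1 # d @ [-1]) ` nn L 0 0"
  proof
    fix m assume m: "m \<in> excp (Suc (Suc L))"
    hence ml: "length m = Suc (Suc L)" "set m \<subseteq> {-1,1}" unfolding excp_def srw_paths_def by auto
    then obtain s r where mr: "m = s # r" by (cases m) auto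
    with ml obtain d e where re: "r = d @ [e]" by (cases r rule: rev_cases) auto
    have dl: "length d = L" using ml mr re by simp
    have sd: "s \<in> {-1,1}" "e \<in> {-1,1}" "set d \<subseteq> {-1,1}" using ml mr re by auto
    have ps: "srw_pos m (Suc j) = s + srw_pos d j" if "j \<le> L" for j
      using that dl by (simp add: mr re srw_pos_append)
    have "srw_pos m 1 > 0" using m unfolding excp_def by auto
    hence s1: "s = 1" using ps[of 0] sd by auto
    have "srw_pos m (Suc (Suc L)) = 0" using m unfolding excp_def by auto
    hence sum0: "s + sum_list d + e = 0" using dl by (simp add: mr re srw_pos_full)
    have "srw_pos m (Suc L) > 0" using m unfolding excp_def by auto
    hence "s + sum_list d > 0" using ps[of L] dl by (simp add: srw_pos_full)
    hence e1: "e = -1" using sum0 sd by auto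
    have "\<forall>j\<le>L. 0 \<le> 0 + srw_pos d j"
    proof (intro allI impI)
      fix j assume "j \<le> L"
      have "srw_pos m (Suc j) > 0" using m \<open>j \<le> L\<close> unfolding excp_def by auto
      thus "0 \<le> 0 + srw_pos d j" using ps[OF \<open>j \<le> L\<close>] s1 by simp
    qed
    hence "d \<in> nn L 0 0" using dl sd sum0 s1 e1 unfolding nn_def srw_paths_def by auto
    thus "m \<in> (\<lambda>d. 1 # d @ [-1]) ` nn L 0 0" using mr re s1 e1 by auto
  qed
qed

lemma card_excp_SS: "card (excp (Suc (Suc L))) = card (nn L 0 0)"
  unfolding excp_SS by (rule card_image) (simp add: inj_on_def)

lemma card_excp_even: "n \<ge> 1 \<Longrightarrow> card (excp (2*n)) = Dy (n - 1)"
proof -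
  assume "n \<ge> 1"
  then obtain k where "n = Suc k" by (cases n) auto
  hence "2*n = Suc (Suc (2*k))" by simp
  thus ?thesis using card_excp_SS[of "2*k"] \<open>n = Suc k\<close> by (simp add: Dy_def)
qed

lemma E_ratio:
  assumes "even l1" "even l2" "l1 \<ge> 2" "l2 \<ge> 2"
  shows "real (card (excp (l1 + l2))) \<le> 2 * real l1 ^ 2 * real (card (excp l1)) * real (card (excp l2))"
proof -
  obtain n m where nm: "l1 = 2*n" "l2 = 2*m" using assms by (auto elim!: evenE)
  have n1: "n \<ge> 1" "m \<ge> 1" using assms nm by auto
  have "card (excp (l1 + l2)) = Dy (n + m - 1)"
    using card_excp_even[of "n+m"] n1 nm by (simp add: algebra_simps)
  also have "\<dots> \<le> 8 * n^2 * Dy (n-1) * Dy (m-1)" by (rule Dy_ratio[OF n1])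
  also have "\<dots> = 2 * l1^2 * card (excp l1) * card (excp l2)"
    using card_excp_even[of n] card_excp_even[of m] n1 nm by (simp add: power2_eq_square)
  finally have "card (excp (l1 + l2)) \<le> 2 * l1^2 * card (excp l1) * card (excp l2)" .
  hence "real (card (excp (l1 + l2))) \<le> real (2 * l1^2 * card (excp l1) * card (excp l2))"
    by (simp only: of_nat_le_iff)
  thus ?thesis by simp
qed

lemma sign_same:
  fixes a b :: int
  shows "a \<noteq> 0 \<Longrightarrow> b \<noteq> 0 \<Longrightarrow> \<bar>a - b\<bar> \<le> 1 \<Longrightarrow> (a > 0 \<longleftrightarrow> b > 0)"
  by auto

lemma exc_sign:
  assumes m: "m \<in> srw_paths L" "srw_pos m L = 0" "\<forall>j. 0 < j \<and> j < L \<longrightarrow> srw_pos m j \<noteq> 0"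
  shows "m \<in> excp L \<union> excn L"
proof -
  have key: "\<forall>j. 0 < j \<and> j < L \<longrightarrow> (srw_pos m j > 0 \<longleftrightarrow> srw_pos m 1 > 0)"
  proof (intro allI impI)
    fix j assume j: "0 < j \<and> j < L"
    then obtain i where i: "j = Suc i" by (cases j) auto
    show "srw_pos m j > 0 \<longleftrightarrow> srw_pos m 1 > 0"
      using j unfolding i
    proof (induction i)
      case 0 thus ?case by simp
    next
      case (Suc i)
      have "srw_pos m (Suc (Suc i)) = srw_pos m (Suc i) + m ! Suc i" "m ! Suc i \<in> {-1,1}"
        using pos_step[OF m(1), of "Suc i"] Suc.prems by auto
      hence "\<bar>srw_pos m (Suc (Suc i)) - srw_pos m (Suc i)\<bar> \<le> 1" by auto
      moreover have "srw_pos m (Suc (Suc i)) \<noteq> 0" "srw_pos m (Suc i) \<noteq> 0"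
        using m(3) Suc.prems by auto
      ultimately have "srw_pos m (Suc (Suc i)) > 0 \<longleftrightarrow> srw_pos m (Suc i) > 0"
        using sign_same by blast
      thus ?case using Suc by simp
    qed
  qed
  show ?thesis
  proof (cases "srw_pos m 1 > 0")
    case True
    hence "m \<in> excp L" using key m unfolding excp_def by auto
    thus ?thesis by simp
  next
    case False
    hence "\<forall>j. 0 < j \<and> j < L \<longrightarrow> srw_pos m j < 0"
      using key m(3) by (metis linorder_neqE_linordered_idom)
    hence "m \<in> excn L" using m unfolding excn_def by auto
    thus ?thesis by simp
  qed
qed

lemma excp_Delta: "m \<in> excp L \<Longrightarrow> 1 \<le> n \<Longrightarrow> n \<le> L \<Longrightarrow> srw_Delta m n = 0"
proof -
  assume m: "m \<in> excp L" and n: "1 \<le> n" "n \<le> L"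
  show ?thesis
  proof (cases "n = L")
    case True
    have "\<not> srw_pos m (n - 1) < 0"
    proof (cases "n - 1 = 0")
      case True thus ?thesis by simp
    next
      case False
      hence "srw_pos m (n - 1) > 0" using m n unfolding excp_def by auto
      thus ?thesis by simp
    qed
    moreover have "\<not> srw_pos m n < 0" using m True unfolding excp_def by simp
    ultimately show ?thesis unfolding srw_Delta_def by simp
  next
    case False
    hence "srw_pos m n > 0" using m n unfolding excp_def by auto
    thus ?thesis unfolding srw_Delta_def by simp
  qed
qed

lemma excn_Delta: "m \<in> excn L \<Longrightarrow> 1 \<le> n \<Longrightarrow> n \<le> L \<Longrightarrow> srw_Delta m n = 1"
proof -
  assume m: "m \<in> excn L" and n: "1 \<le> n" "n \<le> L"
  show ?thesis
  proof (cases "n = L")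
    case True
    have "L \<noteq> 1"
    proof
      assume "L = 1"
      then obtain s where "m = [s]" "s \<in> {-1,1}" using m unfolding excn_def srw_paths_def
        by (cases m) auto
      thus False using m \<open>L = 1\<close> unfolding excn_def by (auto simp: srw_pos_def)
    qed
    hence "srw_pos m (n - 1) < 0" using m n True unfolding excn_def by auto
    thus ?thesis using m True unfolding srw_Delta_def excn_def by auto
  next
    case False
    thus ?thesis using m n unfolding srw_Delta_def excn_def by auto
  qed
qed

definition en :: "real \<Rightarrow> (nat \<Rightarrow> real) \<Rightarrow> int list \<Rightarrow> real" where
  "en h w xs = (\<Sum>n = 1..length xs. (w n + h) * srw_Delta xs n)"

definition sh :: "nat \<Rightarrow> (nat \<Rightarrow> real) \<Rightarrow> nat \<Rightarrow> real" where
  "sh a w n = w (a + n)"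

definition wt :: "real \<Rightarrow> real \<Rightarrow> (nat \<Rightarrow> real) \<Rightarrow> int list \<Rightarrow> real" where
  "wt lam h w xs = exp (- 2 * lam * en h w xs)"

lemma sh_sh: "sh a (sh b w) = sh (b + a) w"
  by (rule ext) (simp add: sh_def add.assoc)

lemma wt_pos: "wt lam h w xs > 0" by (simp add: wt_def)

lemma sum_split_shift:
  fixes f :: "nat \<Rightarrow> real"
  shows "(\<Sum>n = 1..l1 + l2. f n) = (\<Sum>n = 1..l1. f n) + (\<Sum>n = 1..l2. f (l1 + n))"
proof -
  have "(\<Sum>n = 1..l1 + l2. f n) = (\<Sum>n = 1..l1. f n) + (\<Sum>n = l1 + 1..l1 + l2. f n)"
    by (rule sum.ub_add_nat) simp
  also have "(\<Sum>n = l1 + 1..l1 + l2. f n) = (\<Sum>n = 1 + l1..l2 + l1. f n)"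
    by (simp add: add.commute)
  also have "\<dots> = (\<Sum>n = 1..l2. f (n + l1))" by (rule sum.shift_bounds_cl_nat_ivl)
  finally show ?thesis by (simp add: add.commute)
qed

lemma Delta_append_left: "n \<le> length p \<Longrightarrow> srw_Delta (p @ q) n = srw_Delta p n"
  unfolding srw_Delta_def by (simp add: srw_pos_append)

lemma Delta_append_right:
  assumes "sum_list p = 0" "1 \<le> j"
  shows "srw_Delta (p @ q) (length p + j) = srw_Delta q j"
proof -
  have a: "srw_pos (p @ q) (length p + j) = srw_pos q j"
    using assms by (simp add: srw_pos_append)
  have b: "srw_pos (p @ q) (length p + j - 1) = srw_pos q (j - 1)"
  proof (cases "j = 1")
    case True thus ?thesis using assms by (simp add: srw_pos_append srw_pos_full)
  next
    case False thus ?thesis using assms by (simp add: srw_pos_append)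
  qed
  show ?thesis unfolding srw_Delta_def a b ..
qed

lemma en_append:
  assumes "sum_list p = 0"
  shows "en h w (p @ q) = en h w p + en h (sh (length p) w) q"
proof -
  have "en h w (p @ q) = (\<Sum>n = 1..length p + length q. (w n + h) * srw_Delta (p @ q) n)"
    by (simp add: en_def)
  also have "\<dots> = (\<Sum>n = 1..length p. (w n + h) * srw_Delta (p @ q) n)
      + (\<Sum>n = 1..length q. (w (length p + n) + h) * srw_Delta (p @ q) (length p + n))"
    by (rule sum_split_shift)
  also have "(\<Sum>n = 1..length p. (w n + h) * srw_Delta (p @ q) n) = en h w p"
    unfolding en_def by (intro sum.cong) (auto simp: Delta_append_left)
  also have "(\<Sum>n = 1..length q. (w (length p + n) + h) * srw_Delta (p @ q) (length p + n))
      = en h (sh (length p) w) q"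
    unfolding en_def sh_def by (intro sum.cong) (auto simp: Delta_append_right[OF assms])
  finally show ?thesis .
qed

lemma wt_append:
  "sum_list p = 0 \<Longrightarrow> wt lam h w (p @ q) = wt lam h w p * wt lam h (sh (length p) w) q"
  unfolding wt_def by (simp add: en_append algebra_simps exp_add[symmetric])

lemma en_excp: "m \<in> excp L \<Longrightarrow> en h w m = 0"
proof -
  assume m: "m \<in> excp L"
  hence "length m = L" unfolding excp_def srw_paths_def by simp
  thus ?thesis unfolding en_def using excp_Delta[OF m] by (intro sum.neutral) auto
qed

lemma en_excn: "m \<in> excn L \<Longrightarrow> en h w m = (\<Sum>n = 1..L. w n + h)"
proof -
  assume m: "m \<in> excn L"
  hence "length m = L" unfolding excn_def srw_paths_def by simp
  thus ?thesis unfolding en_def using excn_Delta[OF m] by (intro sum.cong) auto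
qed

lemma excp_excn_disj: "L \<ge> 2 \<Longrightarrow> excp L \<inter> excn L = {}"
  unfolding excp_def excn_def by force

lemma inner_bound:
  fixes lam h :: real and w :: "nat \<Rightarrow> real"
  assumes "a < t" "t < b" "even (t - a)" "even (b - t)" "2 * real (t - a)^2 \<le> R"
  shows "(\<Sum>m\<in>excp (b-a) \<union> excn (b-a). wt lam h (sh a w) m)
     \<le> R * (\<Sum>(m1,m2)\<in>excp (t-a) \<times> excp (b-t) \<union> excn (t-a) \<times> excn (b-t).
              wt lam h (sh a w) m1 * wt lam h (sh t w) m2)"
proof -
  define l1 where "l1 = t - a"
  define l2 where "l2 = b - t"
  have L: "b - a = l1 + l2" using assms unfolding l1_def l2_def by simp
  have ev: "even l1" "even l2" "l1 \<noteq> 0" "l2 \<noteq> 0" using assms unfolding l1_def l2_def by auto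
  have l12: "l1 \<ge> 2" "l2 \<ge> 2" "even l1" "even l2"
    using ev by presburger+
  define X where "X = (\<Sum>n = 1..l1 + l2. sh a w n + h)"
  define X1 where "X1 = (\<Sum>n = 1..l1. sh a w n + h)"
  define X2 where "X2 = (\<Sum>n = 1..l2. sh t w n + h)"
  have X: "X = X1 + X2"
  proof -
    have "X = X1 + (\<Sum>n = 1..l2. sh a w (l1 + n) + h)"
      unfolding X_def X1_def by (rule sum_split_shift)
    moreover have "sh a w (l1 + n) = sh t w n" for n
      using assms unfolding sh_def l1_def by simp
    ultimately show ?thesis unfolding X2_def by simp
  qed
  define e where "e = exp (- 2 * lam * X)"
  define EL where "EL = real (card (excp (l1 + l2)))"
  define E1 where "E1 = real (card (excp l1))"
  define E2 where "E2 = real (card (excp l2))"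
  have Epos: "EL \<ge> 0" "E1 \<ge> 0" "E2 \<ge> 0" "e \<ge> 0" unfolding EL_def E1_def E2_def e_def by auto
  have "(\<Sum>m\<in>excp (b-a) \<union> excn (b-a). wt lam h (sh a w) m)
      \<le> (\<Sum>m\<in>excp (l1+l2). wt lam h (sh a w) m) + (\<Sum>m\<in>excn (l1+l2). wt lam h (sh a w) m)"
  proof -
    have "(\<Sum>m\<in>excp (b-a) \<union> excn (b-a). wt lam h (sh a w) m)
      = (\<Sum>m\<in>excp (b-a). wt lam h (sh a w) m) + (\<Sum>m\<in>excn (b-a). wt lam h (sh a w) m)
        - (\<Sum>m\<in>excp (b-a) \<inter> excn (b-a). wt lam h (sh a w) m)"
      by (rule sum_Un) (auto intro: excp_finite excn_finite)
    moreover have "(\<Sum>m\<in>excp (b-a) \<inter> excn (b-a). wt lam h (sh a w) m) \<ge> 0"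
      by (intro sum_nonneg) (simp add: less_imp_le wt_pos)
    ultimately show ?thesis using L by simp
  qed
  also have "(\<Sum>m\<in>excp (l1+l2). wt lam h (sh a w) m) = EL"
    unfolding EL_def wt_def by (simp add: en_excp)
  also have "(\<Sum>m\<in>excn (l1+l2). wt lam h (sh a w) m) = EL * e"
  proof -
    have "(\<Sum>m\<in>excn (l1+l2). wt lam h (sh a w) m) = (\<Sum>m\<in>excn (l1+l2). e)"
      unfolding wt_def e_def X_def by (intro sum.cong) (auto simp: en_excn)
    thus ?thesis unfolding EL_def by (simp add: card_excn)
  qed
  also have "EL + EL * e \<le> (2 * real l1 ^ 2 * E1 * E2) * (1 + e)"
  proof -
    have r: "EL \<le> 2 * real l1 ^ 2 * E1 * E2"
      using E_ratio[OF l12(3,4,1,2)] unfolding EL_def E1_def E2_def by simp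
    have "EL * (1 + e) \<le> (2 * real l1 ^ 2 * E1 * E2) * (1 + e)"
      using r Epos by (intro mult_right_mono) auto
    thus ?thesis by (simp add: distrib_left)
  qed
  also have "\<dots> \<le> R * (E1 * E2 + E1 * E2 * e)"
  proof -
    have "2 * real l1 ^ 2 \<le> R" using assms unfolding l1_def by simp
    moreover have "0 \<le> E1 * E2 * (1 + e)" using Epos by simp
    ultimately have "(2 * real l1 ^ 2) * (E1 * E2 * (1 + e)) \<le> R * (E1 * E2 * (1 + e))"
      by (rule mult_right_mono)
    thus ?thesis by (simp add: algebra_simps)
  qed
  also have "E1 * E2 + E1 * E2 * e = (\<Sum>(m1,m2)\<in>excp (t-a) \<times> excp (b-t) \<union> excn (t-a) \<times> excn (b-t).
              wt lam h (sh a w) m1 * wt lam h (sh t w) m2)"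
  proof -
    have disj: "(excp l1 \<times> excp l2) \<inter> (excn l1 \<times> excn l2) = {}"
      using excp_excn_disj[OF l12(1)] by blast
    have "(\<Sum>(m1,m2)\<in>excp l1 \<times> excp l2 \<union> excn l1 \<times> excn l2. wt lam h (sh a w) m1 * wt lam h (sh t w) m2)
      = (\<Sum>(m1,m2)\<in>excp l1 \<times> excp l2. wt lam h (sh a w) m1 * wt lam h (sh t w) m2)
      + (\<Sum>(m1,m2)\<in>excn l1 \<times> excn l2. wt lam h (sh a w) m1 * wt lam h (sh t w) m2)"
      by (rule sum.union_disjoint) (simp_all add: excp_finite excn_finite disj)
    also have "(\<Sum>(m1,m2)\<in>excp l1 \<times> excp l2. wt lam h (sh a w) m1 * wt lam h (sh t w) m2)
       = (\<Sum>m1\<in>excp l1. wt lam h (sh a w) m1) * (\<Sum>m2\<in>excp l2. wt lam h (sh t w) m2)"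
      by (rule sum_prod2)
    also have "\<dots> = E1 * E2" unfolding E1_def E2_def wt_def by (simp add: en_excp)
    also have "(\<Sum>(m1,m2)\<in>excn l1 \<times> excn l2. wt lam h (sh a w) m1 * wt lam h (sh t w) m2)
       = (\<Sum>m1\<in>excn l1. wt lam h (sh a w) m1) * (\<Sum>m2\<in>excn l2. wt lam h (sh t w) m2)"
      by (rule sum_prod2)
    also have "(\<Sum>m1\<in>excn l1. wt lam h (sh a w) m1) = E1 * exp (- 2 * lam * X1)"
    proof -
      have "(\<Sum>m1\<in>excn l1. wt lam h (sh a w) m1) = (\<Sum>m1\<in>excn l1. exp (- 2 * lam * X1))"
        unfolding wt_def X1_def by (intro sum.cong) (auto simp: en_excn)
      thus ?thesis unfolding E1_def by (simp add: card_excn)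
    qed
    also have "(\<Sum>m2\<in>excn l2. wt lam h (sh t w) m2) = E2 * exp (- 2 * lam * X2)"
    proof -
      have "(\<Sum>m2\<in>excn l2. wt lam h (sh t w) m2) = (\<Sum>m2\<in>excn l2. exp (- 2 * lam * X2))"
        unfolding wt_def X2_def by (intro sum.cong) (auto simp: en_excn)
      thus ?thesis unfolding E2_def by (simp add: card_excn)
    qed
    also have "E1 * exp (- 2 * lam * X1) * (E2 * exp (- 2 * lam * X2)) = E1 * E2 * e"
      unfolding e_def X by (simp add: algebra_simps exp_add[symmetric])
    finally show ?thesis unfolding l1_def l2_def by simp
  qed
  finally show ?thesis using L by simp
qed

definition Wset :: "nat set \<Rightarrow> nat \<Rightarrow> int list set" where
  "Wset C N = {xs \<in> srw_paths N. (\<forall>c\<in>C. srw_pos xs c = 0) \<and> srw_pos xs N = 0}"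

definition Pc :: "nat set \<Rightarrow> nat \<Rightarrow> int list set" where
  "Pc C a = {p \<in> srw_paths a. srw_pos p a = 0 \<and> (\<forall>c\<in>C. srw_pos p c = 0)}"

definition Br :: "nat \<Rightarrow> int list set" where
  "Br k = {q \<in> srw_paths k. srw_pos q k = 0}"

definition Gs :: "nat set \<Rightarrow> nat \<Rightarrow> nat \<Rightarrow> nat \<Rightarrow> int list set" where
  "Gs C N a b = (\<lambda>(p,m,q). p @ m @ q) ` (Pc C a \<times> (excp (b-a) \<union> excn (b-a)) \<times> Br (N-b))"

definition Hs :: "nat set \<Rightarrow> nat \<Rightarrow> nat \<Rightarrow> nat \<Rightarrow> nat \<Rightarrow> int list set" where
  "Hs C N t a b = (\<lambda>(p,mm,q). p @ fst mm @ snd mm @ q) `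
     (Pc C a \<times> (excp (t-a) \<times> excp (b-t) \<union> excn (t-a) \<times> excn (b-t)) \<times> Br (N-b))"

lemma Wset_finite: "finite (Wset C N)" unfolding Wset_def using srw_paths_finite by simp
lemma Pc_finite: "finite (Pc C a)" unfolding Pc_def using srw_paths_finite by simp
lemma Br_finite: "finite (Br k)" unfolding Br_def using srw_paths_finite by simp
lemma Gs_finite: "finite (Gs C N a b)"
  unfolding Gs_def by (intro finite_imageI finite_cartesian_product Pc_finite Br_finite
      finite_UnI excp_finite excn_finite)
lemma Hs_finite: "finite (Hs C N t a b)"
  unfolding Hs_def by (intro finite_imageI finite_cartesian_product Pc_finite Br_finite
      finite_UnI excp_finite excn_finite)

lemma paths_len: "xs \<in> srw_paths L \<Longrightarrow> length xs = L" unfolding srw_paths_def by simp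

lemma Pc_len: "p \<in> Pc C a \<Longrightarrow> length p = a \<and> sum_list p = 0"
  unfolding Pc_def srw_paths_def using srw_pos_full[of p a] by auto
lemma Br_len: "q \<in> Br k \<Longrightarrow> length q = k \<and> sum_list q = 0"
  unfolding Br_def srw_paths_def using srw_pos_full[of q k] by auto
lemma exc_len: "m \<in> excp L \<union> excn L \<Longrightarrow> length m = L \<and> sum_list m = 0"
  unfolding excp_def excn_def srw_paths_def using srw_pos_full[of m L] by auto

lemma wt3:
  assumes "sum_list p = 0" "sum_list m = 0"
  shows "wt lam h w (p @ m @ q) = wt lam h w p * wt lam h (sh (length p) w) m * wt lam h (sh (length p + length m) w) q"
  using assms by (simp add: wt_append sh_sh add.commute)

lemma wt4:
  assumes "sum_list p = 0" "sum_list m1 = 0" "sum_list m2 = 0"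
  shows "wt lam h w (p @ m1 @ m2 @ q) = wt lam h w p * (wt lam h (sh (length p) w) m1 *
     wt lam h (sh (length p + length m1) w) m2) * wt lam h (sh (length p + length m1 + length m2) w) q"
  using assms by (simp add: wt_append sh_sh add.commute add.left_commute)

lemma G_sum:
  assumes "a \<le> b" "b \<le> N"
  shows "(\<Sum>x\<in>Gs C N a b. wt lam h w x) \<le> (\<Sum>p\<in>Pc C a. wt lam h w p)
     * (\<Sum>m\<in>excp (b-a) \<union> excn (b-a). wt lam h (sh a w) m) * (\<Sum>q\<in>Br (N-b). wt lam h (sh b w) q)"
proof -
  let ?D = "Pc C a \<times> (excp (b-a) \<union> excn (b-a)) \<times> Br (N-b)"
  let ?f = "\<lambda>(p,m,q). p @ m @ (q::int list)"
  have fin: "finite ?D" by (intro finite_cartesian_product Pc_finite Br_finite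
      finite_UnI excp_finite excn_finite)
  have "(\<Sum>x\<in>Gs C N a b. wt lam h w x) \<le> sum (wt lam h w \<circ> ?f) ?D"
    unfolding Gs_def by (rule sum_image_le[OF fin]) (simp add: less_imp_le wt_pos)
  also have "\<dots> = (\<Sum>(p,m,q)\<in>?D. wt lam h w p * wt lam h (sh a w) m * wt lam h (sh b w) q)"
  proof (rule sum.cong)
    fix z assume "z \<in> ?D"
    then obtain p m q where z: "z = (p,m,q)" "p \<in> Pc C a" "m \<in> excp (b-a) \<union> excn (b-a)" "q \<in> Br (N-b)"
      by auto
    have "length p + length m = b" using Pc_len[OF z(2)] exc_len[OF z(3)] assms by simp
    thus "(wt lam h w \<circ> ?f) z = (case z of (p,m,q) \<Rightarrow> wt lam h w p * wt lam h (sh a w) m * wt lam h (sh b w) q)"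
      using z Pc_len[OF z(2)] exc_len[OF z(3)] by (simp add: wt3)
  qed simp
  also have "\<dots> = (\<Sum>p\<in>Pc C a. wt lam h w p)
     * (\<Sum>m\<in>excp (b-a) \<union> excn (b-a). wt lam h (sh a w) m) * (\<Sum>q\<in>Br (N-b). wt lam h (sh b w) q)"
    by (rule sum_prod3)
  finally show ?thesis .
qed

lemma H_sum:
  assumes "a \<le> t" "t \<le> b" "b \<le> N"
  shows "(\<Sum>y\<in>Hs C N t a b. wt lam h w y) = (\<Sum>p\<in>Pc C a. wt lam h w p)
     * (\<Sum>(m1,m2)\<in>excp (t-a) \<times> excp (b-t) \<union> excn (t-a) \<times> excn (b-t). wt lam h (sh a w) m1 * wt lam h (sh t w) m2)
     * (\<Sum>q\<in>Br (N-b). wt lam h (sh b w) q)"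
proof -
  let ?M = "excp (t-a) \<times> excp (b-t) \<union> excn (t-a) \<times> excn (b-t)"
  let ?D = "Pc C a \<times> ?M \<times> Br (N-b)"
  let ?f = "\<lambda>(p,mm,q). p @ fst mm @ snd mm @ (q::int list)"
  have Mlen: "length (fst mm) = t - a \<and> sum_list (fst mm) = 0 \<and> length (snd mm) = b - t \<and> sum_list (snd mm) = 0"
    if "mm \<in> ?M" for mm
    using that exc_len[of "fst mm" "t-a"] exc_len[of "snd mm" "b-t"] by auto
  have inj: "inj_on ?f ?D"
  proof (rule inj_onI)
    fix z z' assume z: "z \<in> ?D" "z' \<in> ?D" "?f z = ?f z'"
    obtain p mm q where zz: "z = (p,mm,q)" "p \<in> Pc C a" "mm \<in> ?M" "q \<in> Br (N-b)" using z(1) by auto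
    obtain p' mm' q' where zz': "z' = (p',mm',q')" "p' \<in> Pc C a" "mm' \<in> ?M" "q' \<in> Br (N-b)" using z(2) by auto
    have e: "p @ fst mm @ snd mm @ q = p' @ fst mm' @ snd mm' @ q'" using z(3) zz zz' by simp
    have l: "length p = length p'" "length (fst mm) = length (fst mm')" "length (snd mm) = length (snd mm')"
      using Pc_len[OF zz(2)] Pc_len[OF zz'(2)] Mlen[OF zz(3)] Mlen[OF zz'(3)] by auto
    from e l(1) have "p = p'" "fst mm @ snd mm @ q = fst mm' @ snd mm' @ q'"
      by (simp_all add: append_eq_append_conv)
    moreover from this(2) l(2) have "fst mm = fst mm'" "snd mm @ q = snd mm' @ q'"
      by (simp_all add: append_eq_append_conv)
    moreover from this(2) l(3) have "snd mm = snd mm'" "q = q'"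
      by (simp_all add: append_eq_append_conv)
    ultimately show "z = z'" using zz zz' by (simp add: prod_eq_iff)
  qed
  have "(\<Sum>y\<in>Hs C N t a b. wt lam h w y) = sum (wt lam h w \<circ> ?f) ?D"
    unfolding Hs_def by (rule sum.reindex[OF inj])
  also have "\<dots> = (\<Sum>(p,mm,q)\<in>?D. wt lam h w p * (wt lam h (sh a w) (fst mm) * wt lam h (sh t w) (snd mm)) * wt lam h (sh b w) q)"
  proof (rule sum.cong)
    fix z assume "z \<in> ?D"
    then obtain p mm q where z: "z = (p,mm,q)" "p \<in> Pc C a" "mm \<in> ?M" "q \<in> Br (N-b)"
      by auto
    have "length p + length (fst mm) = t" "length p + length (fst mm) + length (snd mm) = b"
      using Pc_len[OF z(2)] Mlen[OF z(3)] assms by auto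
    thus "(wt lam h w \<circ> ?f) z = (case z of (p,mm,q) \<Rightarrow> wt lam h w p * (wt lam h (sh a w) (fst mm) * wt lam h (sh t w) (snd mm)) * wt lam h (sh b w) q)"
      using z Pc_len[OF z(2)] Mlen[OF z(3)] by (simp add: wt4)
  qed simp
  also have "\<dots> = (\<Sum>p\<in>Pc C a. wt lam h w p)
     * (\<Sum>mm\<in>?M. wt lam h (sh a w) (fst mm) * wt lam h (sh t w) (snd mm)) * (\<Sum>q\<in>Br (N-b). wt lam h (sh b w) q)"
    by (rule sum_prod3)
  also have "(\<Sum>mm\<in>?M. wt lam h (sh a w) (fst mm) * wt lam h (sh t w) (snd mm))
     = (\<Sum>(m1,m2)\<in>?M. wt lam h (sh a w) m1 * wt lam h (sh t w) m2)"
    by (simp add: split_beta)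
  finally show ?thesis .
qed

lemma exc_interior: "m \<in> excp L \<union> excn L \<Longrightarrow> 0 < j \<Longrightarrow> j < L \<Longrightarrow> srw_pos m j \<noteq> 0"
  unfolding excp_def excn_def by force

lemma exc_paths: "m \<in> excp L \<union> excn L \<Longrightarrow> m \<in> srw_paths L"
  unfolding excp_def excn_def by auto

lemma pos4:
  assumes "length p = a" "sum_list p = 0" "length m1 = l1" "sum_list m1 = 0"
    "length m2 = l2" "sum_list m2 = 0" "sum_list q = 0"
  shows "j \<le> a \<Longrightarrow> srw_pos (p @ m1 @ m2 @ q) j = srw_pos p j"
    and "a \<le> j \<Longrightarrow> j \<le> a + l1 \<Longrightarrow> srw_pos (p @ m1 @ m2 @ q) j = srw_pos m1 (j - a)"
    and "a + l1 \<le> j \<Longrightarrow> j \<le> a + l1 + l2 \<Longrightarrow> srw_pos (p @ m1 @ m2 @ q) j = srw_pos m2 (j - a - l1)"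
    and "srw_pos (p @ m1 @ m2 @ q) (a + l1 + l2 + length q) = 0"
proof -
  show "j \<le> a \<Longrightarrow> srw_pos (p @ m1 @ m2 @ q) j = srw_pos p j"
    using assms by (simp add: srw_pos_append)
  show "a \<le> j \<Longrightarrow> j \<le> a + l1 \<Longrightarrow> srw_pos (p @ m1 @ m2 @ q) j = srw_pos m1 (j - a)"
    using assms by (cases "j = a") (auto simp: srw_pos_append srw_pos_full)
  show "a + l1 \<le> j \<Longrightarrow> j \<le> a + l1 + l2 \<Longrightarrow> srw_pos (p @ m1 @ m2 @ q) j = srw_pos m2 (j - a - l1)"
    using assms by (cases "j = a + l1") (auto simp: srw_pos_append srw_pos_full)
  show "srw_pos (p @ m1 @ m2 @ q) (a + l1 + l2 + length q) = 0"
    using assms by (simp add: srw_pos_full)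
qed

lemma H_props:
  assumes y: "y \<in> Hs C N t a b" and ab: "a < t" "t < b" "b \<le> N" and C: "\<forall>c\<in>C. c \<le> a"
  shows "y \<in> Wset (insert t C) N" "srw_pos y a = 0" "srw_pos y b = 0"
    "\<And>j. a < j \<Longrightarrow> j < t \<Longrightarrow> srw_pos y j \<noteq> 0" "\<And>j. t < j \<Longrightarrow> j < b \<Longrightarrow> srw_pos y j \<noteq> 0"
proof -
  obtain p m1 m2 q where yy: "y = p @ m1 @ m2 @ q" "p \<in> Pc C a" "q \<in> Br (N-b)"
    and mm: "(m1 \<in> excp (t-a) \<and> m2 \<in> excp (b-t)) \<or> (m1 \<in> excn (t-a) \<and> m2 \<in> excn (b-t))"
    using y unfolding Hs_def by auto
  have m1: "m1 \<in> excp (t-a) \<union> excn (t-a)" and m2: "m2 \<in> excp (b-t) \<union> excn (b-t)" using mm by auto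
  note L = Pc_len[OF yy(2)] Br_len[OF yy(3)] exc_len[OF m1] exc_len[OF m2]
  note P = pos4[of p a m1 "t-a" m2 "b-t" q, OF L(1)[THEN conjunct1] L(1)[THEN conjunct2]
      L(3)[THEN conjunct1] L(3)[THEN conjunct2] L(4)[THEN conjunct1] L(4)[THEN conjunct2]
      L(2)[THEN conjunct2], folded yy(1)]
  have e1: "a + (t - a) = t" "a + (t - a) + (b - t) = b" "a + (t-a) + (b-t) + (N-b) = N" using ab by auto
  show "srw_pos y a = 0" using P(1)[of a] yy(2) unfolding Pc_def by simp
  show "srw_pos y b = 0" using P(3)[of b] e1 exc_len[OF m2] srw_pos_full[of m2 "b-t"] by simp
  show "srw_pos y j \<noteq> 0" if "a < j" "j < t" for j
    using P(2)[of j] that exc_interior[OF m1, of "j-a"] by simp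
  show "srw_pos y j \<noteq> 0" if "t < j" "j < b" for j
    using P(3)[of j] that e1 exc_interior[OF m2, of "j-t"] by simp
  have "y \<in> srw_paths N"
    using yy exc_paths[OF m1] exc_paths[OF m2] e1 L unfolding Pc_def Br_def srw_paths_def by auto
  moreover have "srw_pos y N = 0" using P(4) L(2) e1 by simp
  moreover have "srw_pos y t = 0" using P(2)[of t] ab exc_len[OF m1] srw_pos_full[of m1 "t-a"] by simp
  moreover have "srw_pos y c = 0" if "c \<in> C" for c
    using P(1)[of c] that C yy(2) unfolding Pc_def by auto
  ultimately show "y \<in> Wset (insert t C) N" unfolding Wset_def by auto
qed

definition Iset :: "nat \<Rightarrow> nat \<Rightarrow> nat \<Rightarrow> (nat \<times> nat) set" where
  "Iset u t N = {(a,b). u \<le> a \<and> a < t \<and> t < b \<and> b \<le> N \<and> even a \<and> even b}"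

lemma Iset_finite: "finite (Iset u t N)"
proof -
  have "Iset u t N \<subseteq> {0..N} \<times> {0..N}" unfolding Iset_def by auto
  thus ?thesis by (rule finite_subset) simp
qed

lemma H_disjoint:
  assumes "(a,b) \<in> Iset u t N" "(a',b') \<in> Iset u t N" "(a,b) \<noteq> (a',b')" "\<forall>c\<in>C. c \<le> u"
  shows "Hs C N t a b \<inter> Hs C N t a' b' = {}"
proof (rule ccontr)
  assume "Hs C N t a b \<inter> Hs C N t a' b' \<noteq> {}"
  then obtain y where y: "y \<in> Hs C N t a b" "y \<in> Hs C N t a' b'" by auto
  have ab: "u \<le> a" "a < t" "t < b" "b \<le> N" "u \<le> a'" "a' < t" "t < b'" "b' \<le> N"
    using assms(1,2) unfolding Iset_def by auto
  have C1: "\<forall>c\<in>C. c \<le> a" "\<forall>c\<in>C. c \<le> a'" using assms(4) ab by auto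
  note H1 = H_props[OF y(1) ab(2,3,4) C1(1)]
  note H2 = H_props[OF y(2) ab(6,7,8) C1(2)]
  have "a = a'"
  proof (rule ccontr)
    assume "a \<noteq> a'"
    hence "a < a' \<or> a' < a" by auto
    thus False using H1 H2 ab by auto
  qed
  moreover have "b = b'"
  proof (rule ccontr)
    assume "b \<noteq> b'"
    hence "b < b' \<or> b' < b" by auto
    thus False using H1 H2 ab by auto
  qed
  ultimately show False using assms(3) by simp
qed

lemma decomp:
  assumes x: "x \<in> Wset C N" "srw_pos x t \<noteq> 0" and ut: "u < t" "t \<le> N" "srw_pos x u = 0"
    and C: "\<forall>c\<in>C. c \<le> u"
  shows "\<exists>ab\<in>Iset u t N. x \<in> (case ab of (a,b) \<Rightarrow> Gs C N a b)"
proof -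
  have xp: "x \<in> srw_paths N" "srw_pos x N = 0" "\<forall>c\<in>C. srw_pos x c = 0" using x unfolding Wset_def by auto
  define Z where "Z = {j. j \<le> t \<and> srw_pos x j = 0}"
  define Z' where "Z' = {j. t \<le> j \<and> j \<le> N \<and> srw_pos x j = 0}"
  have Zf: "finite Z" "finite Z'" unfolding Z_def Z'_def by auto
  have uZ: "u \<in> Z" using ut unfolding Z_def by simp
  have NZ: "N \<in> Z'" using ut xp unfolding Z'_def by simp
  define a where "a = Max Z"
  define b where "b = Min Z'"
  have aZ: "a \<in> Z" unfolding a_def using Zf uZ by (intro Max_in) auto
  have bZ: "b \<in> Z'" unfolding b_def using Zf NZ by (intro Min_in) auto
  have ua: "u \<le> a" unfolding a_def using Zf uZ by (intro Max_ge)
  have bN: "b \<le> N" using bZ unfolding Z'_def by simp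
  have at: "a < t" using aZ x(2) unfolding Z_def by (cases "a = t") auto
  have tb: "t < b" using bZ x(2) unfolding Z'_def by (cases "b = t") auto
  have pa: "srw_pos x a = 0" using aZ unfolding Z_def by simp
  have pb: "srw_pos x b = 0" using bZ unfolding Z'_def by simp
  have ea: "even a" using pos_zero_even[OF xp(1) _ pa] at ut by simp
  have eb: "even b" using pos_zero_even[OF xp(1) bN pb] .
  have I: "(a,b) \<in> Iset u t N" using ua at tb bN ea eb unfolding Iset_def by simp
  define p where "p = take a x"
  define m where "m = take (b-a) (drop a x)"
  define q where "q = drop b x"
  have xe: "x = p @ m @ q"
  proof -
    have "drop a x = m @ drop (b-a) (drop a x)" unfolding m_def by (rule append_take_drop_id[symmetric])
    moreover have "drop (b-a) (drop a x) = q" unfolding q_def using at tb by simp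
    ultimately show ?thesis unfolding p_def by (metis append_take_drop_id)
  qed
  have aN: "a \<le> N" using at ut by simp
  have pP: "p \<in> Pc C a"
  proof -
    have "p \<in> srw_paths a" unfolding p_def by (rule take_in_paths[OF xp(1) aN])
    moreover have "srw_pos p a = 0" unfolding p_def using pa by (simp add: srw_pos_take)
    moreover have "\<forall>c\<in>C. srw_pos p c = 0" unfolding p_def using xp(3) C ua by (auto simp: srw_pos_take)
    ultimately show ?thesis unfolding Pc_def by simp
  qed
  have posm: "srw_pos m j = srw_pos x (a + j)" if "j \<le> b - a" for j
    unfolding m_def using that pa by (simp add: srw_pos_take srw_pos_drop)
  have mE: "m \<in> excp (b-a) \<union> excn (b-a)"
  proof (rule exc_sign)
    have "drop a x \<in> srw_paths (N - a)" by (rule drop_in_paths[OF xp(1)])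
    thus "m \<in> srw_paths (b - a)" unfolding m_def using bN by (intro take_in_paths) auto
    show "srw_pos m (b - a) = 0" using posm[of "b-a"] pb at tb by simp
    show "\<forall>j. 0 < j \<and> j < b - a \<longrightarrow> srw_pos m j \<noteq> 0"
    proof (intro allI impI)
      fix j assume j: "0 < j \<and> j < b - a"
      show "srw_pos m j \<noteq> 0"
      proof
        assume "srw_pos m j = 0"
        hence z: "srw_pos x (a + j) = 0" using posm[of j] j by simp
        show False
        proof (cases "a + j \<le> t")
          case True
          hence "a + j \<in> Z" using z unfolding Z_def by simp
          hence "a + j \<le> a" unfolding a_def using Zf by (intro Max_ge) auto
          thus False using j by simp
        next
          case False
          hence "a + j \<in> Z'" using z j tb bN unfolding Z'_def by auto
          hence "b \<le> a + j" unfolding b_def using Zf by (intro Min_le) auto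
          thus False using j by linarith
        qed
      qed
    qed
  qed
  have qB: "q \<in> Br (N - b)"
  proof -
    have "q \<in> srw_paths (N - b)" unfolding q_def by (rule drop_in_paths[OF xp(1)])
    moreover have "srw_pos q (N - b) = 0" unfolding q_def using pb xp(2) bN
      by (simp add: srw_pos_drop)
    ultimately show ?thesis unfolding Br_def by simp
  qed
  have "(p, m, q) \<in> Pc C a \<times> (excp (b-a) \<union> excn (b-a)) \<times> Br (N-b)" using pP mE qB by simp
  hence "x \<in> Gs C N a b" unfolding Gs_def xe by (rule rev_image_eqI) simp
  thus ?thesis using I by auto
qed

lemma insertion:
  assumes ut: "u < t" "t \<le> N" "even t" and C: "\<forall>c\<in>C. c \<le> u"
    and zu: "\<forall>x\<in>Wset C N. srw_pos x u = 0"
  shows "(\<Sum>x\<in>Wset C N. wt lam h w x) \<le> (1 + 2 * real (t-u)^2) * (\<Sum>x\<in>Wset (insert t C) N. wt lam h w x)"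
proof -
  define R where "R = 2 * real (t-u)^2"
  define f where "f = wt lam h w"
  have fpos: "\<And>x. 0 \<le> f x" unfolding f_def by (simp add: less_imp_le wt_pos)
  define S where "S = Wset C N"
  define B where "B = {x. srw_pos x t = 0}"
  define I where "I = Iset u t N"
  define G where "G = (\<lambda>ab. case ab of (a,b) \<Rightarrow> Gs C N a b)"
  define H where "H = (\<lambda>ab. case ab of (a,b) \<Rightarrow> Hs C N t a b)"
  have If: "finite I" unfolding I_def by (rule Iset_finite)
  have Gf: "\<And>i. finite (G i)" unfolding G_def by (auto simp: Gs_finite split: prod.splits)
  have Hf: "\<And>i. finite (H i)" unfolding H_def by (auto simp: Hs_finite split: prod.splits)
  have split: "sum f S = sum f (S \<inter> B) + sum f (S - B)"
    unfolding S_def by (rule sum.Int_Diff[OF Wset_finite])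
  have Y: "S \<inter> B = Wset (insert t C) N" unfolding S_def B_def Wset_def by auto
  have Xsub: "S - B \<subseteq> (\<Union>i\<in>I. G i)"
  proof
    fix x assume "x \<in> S - B"
    hence x: "x \<in> Wset C N" "srw_pos x t \<noteq> 0" unfolding S_def B_def by auto
    have "srw_pos x u = 0" using zu x by simp
    from decomp[OF x ut(1,2) this C] show "x \<in> (\<Union>i\<in>I. G i)" unfolding I_def G_def by auto
  qed
  have "sum f (S - B) \<le> sum f (\<Union>i\<in>I. G i)"
    by (rule sum_mono2) (use Xsub If Gf fpos in auto)
  also have "\<dots> \<le> (\<Sum>i\<in>I. sum f (G i))" by (rule sum_UN_le[OF If Gf fpos])
  also have "\<dots> \<le> (\<Sum>i\<in>I. R * sum f (H i))"
  proof (rule sum_mono)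
    fix i assume "i \<in> I"
    then obtain a b where i: "i = (a,b)" and ab: "u \<le> a" "a < t" "t < b" "b \<le> N" "even a" "even b"
      unfolding I_def Iset_def by auto
    define Sp where "Sp = (\<Sum>p\<in>Pc C a. wt lam h w p)"
    define Sq where "Sq = (\<Sum>q\<in>Br (N-b). wt lam h (sh b w) q)"
    define Sm where "Sm = (\<Sum>m\<in>excp (b-a) \<union> excn (b-a). wt lam h (sh a w) m)"
    define Smm where "Smm = (\<Sum>(m1,m2)\<in>excp (t-a) \<times> excp (b-t) \<union> excn (t-a) \<times> excn (b-t).
              wt lam h (sh a w) m1 * wt lam h (sh t w) m2)"
    have SpSq: "0 \<le> Sp" "0 \<le> Sq" unfolding Sp_def Sq_def by (auto intro!: sum_nonneg simp: less_imp_le wt_pos)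
    have "sum f (G i) \<le> Sp * Sm * Sq" unfolding G_def i f_def Sp_def Sm_def Sq_def
      using ab by (simp add: G_sum)
    also have "Sm \<le> R * Smm" unfolding Sm_def Smm_def
    proof (rule inner_bound)
      show "a < t" "t < b" by fact+
      show "even (t - a)" "even (b - t)" using ab ut by auto
      have "real (t - a) \<le> real (t - u)" using ab by simp
      hence "real (t - a)^2 \<le> real (t - u)^2" by (intro power_mono) auto
      thus "2 * real (t - a)^2 \<le> R" unfolding R_def by simp
    qed
    hence "Sp * Sm * Sq \<le> Sp * (R * Smm) * Sq" using SpSq
      by (intro mult_right_mono mult_left_mono) auto
    also have "\<dots> = R * (Sp * Smm * Sq)" by (simp add: algebra_simps)
    also have "Sp * Smm * Sq = sum f (H i)" unfolding H_def i f_def Sp_def Smm_def Sq_def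
      using ab by (simp add: H_sum)
    finally show "sum f (G i) \<le> R * sum f (H i)" .
  qed
  also have "\<dots> = R * sum f (\<Union>i\<in>I. H i)"
  proof -
    have "sum f (\<Union>i\<in>I. H i) = (\<Sum>i\<in>I. sum f (H i))"
    proof (rule sum.UNION_disjoint[OF If])
      show "\<forall>i\<in>I. finite (H i)" using Hf by simp
      show "\<forall>i\<in>I. \<forall>j\<in>I. i \<noteq> j \<longrightarrow> H i \<inter> H j = {}"
      proof (intro ballI impI)
        fix i j assume ij: "i \<in> I" "j \<in> I" "i \<noteq> j"
        obtain a b a' b' where "i = (a,b)" "j = (a',b')" by fastforce
        thus "H i \<inter> H j = {}" unfolding H_def using H_disjoint[OF _ _ _ C] ij unfolding I_def by auto
      qed
    qed
    thus ?thesis by (simp add: sum_distrib_left)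
  qed
  also have "\<dots> \<le> R * sum f (Wset (insert t C) N)"
  proof -
    have "(\<Union>i\<in>I. H i) \<subseteq> Wset (insert t C) N"
    proof
      fix y assume "y \<in> (\<Union>i\<in>I. H i)"
      then obtain a b where ab: "(a,b) \<in> I" "y \<in> Hs C N t a b" unfolding H_def by auto
      hence ab': "u \<le> a" "a < t" "t < b" "b \<le> N" unfolding I_def Iset_def by auto
      have "\<forall>c\<in>C. c \<le> a" using C ab' by auto
      from H_props(1)[OF ab(2) ab'(2,3,4) this] show "y \<in> Wset (insert t C) N" .
    qed
    hence "sum f (\<Union>i\<in>I. H i) \<le> sum f (Wset (insert t C) N)"
      by (intro sum_mono2 Wset_finite) (auto simp: fpos)
    moreover have "0 \<le> R" unfolding R_def by simp
    ultimately show ?thesis by (intro mult_left_mono)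
  qed
  finally have "sum f (S - B) \<le> R * sum f (Wset (insert t C) N)" .
  hence "sum f S \<le> sum f (Wset (insert t C) N) + R * sum f (Wset (insert t C) N)"
    using split Y by simp
  thus ?thesis unfolding S_def f_def R_def by (simp add: algebra_simps)
qed

definition zz :: "nat \<Rightarrow> int list" where
  "zz N = map (\<lambda>i. if even i then 1 else -1) [0..<N]"

lemma zz_sum: "sum_list (map (\<lambda>i. if even i then (1::int) else -1) [0..<n]) = (if even n then 0 else 1)"
  by (induction n) auto

lemma zz_pos: "n \<le> N \<Longrightarrow> srw_pos (zz N) n = (if even n then 0 else 1)"
  unfolding srw_pos_def zz_def by (simp add: take_map zz_sum min_def)

lemma zz_paths: "zz N \<in> srw_paths N"
  unfolding zz_def srw_paths_def by auto

lemma zz_Delta: "n \<le> N \<Longrightarrow> srw_Delta (zz N) n = 0"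
proof -
  assume n: "n \<le> N"
  have "srw_pos (zz N) (n - 1) \<ge> 0" using zz_pos[of "n-1" N] n by simp
  moreover have "srw_pos (zz N) n \<ge> 0" using zz_pos[OF n] by simp
  ultimately show ?thesis unfolding srw_Delta_def by auto
qed

lemma zz_wt: "wt lam h w (zz N) = 1"
proof -
  have "en h w (zz N) = 0" unfolding en_def
    using zz_Delta[of _ N] by (intro sum.neutral) (auto simp: zz_def)
  thus ?thesis unfolding wt_def by simp
qed

lemma zz_Wset: "even N \<Longrightarrow> (\<forall>c\<in>C. even c \<and> c \<le> N) \<Longrightarrow> zz N \<in> Wset C N"
  unfolding Wset_def using zz_paths zz_pos by auto

lemma card_paths: "card (srw_paths N) = 2^N"
proof -
  have "srw_paths N = {xs. set xs \<subseteq> {-1,1} \<and> length xs = N}"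
    unfolding srw_paths_def by auto
  thus ?thesis using card_lists_length_eq[of "{-1,1::int}" N] by (simp add: numeral_2_eq_2)
qed

lemma wt_upper:
  assumes "lam \<ge> 0" "length x = N"
  shows "wt lam h w x \<le> exp (2 * lam * (\<Sum>n = 1..N. \<bar>w n + h\<bar>))"
proof -
  have D: "0 \<le> srw_Delta x n \<and> srw_Delta x n \<le> 1" for n unfolding srw_Delta_def by auto
  have "- (\<Sum>n = 1..N. \<bar>w n + h\<bar>) \<le> en h w x"
  proof -
    have "(\<Sum>n = 1..N. - \<bar>w n + h\<bar>) \<le> (\<Sum>n = 1..N. (w n + h) * srw_Delta x n)"
    proof (rule sum_mono)
      fix n
      have "\<bar>(w n + h) * srw_Delta x n\<bar> \<le> \<bar>w n + h\<bar>"
        using D[of n] by (simp add: abs_mult mult_left_le)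
      thus "- \<bar>w n + h\<bar> \<le> (w n + h) * srw_Delta x n" by linarith
    qed
    thus ?thesis unfolding en_def assms(2) by (simp add: sum_negf)
  qed
  hence "lam * (- (\<Sum>n = 1..N. \<bar>w n + h\<bar>)) \<le> lam * en h w x"
    using assms(1) by (rule mult_left_mono)
  hence "- 2 * lam * en h w x \<le> 2 * lam * (\<Sum>n = 1..N. \<bar>w n + h\<bar>)"
    by linarith
  thus ?thesis unfolding wt_def by simp
qed

lemma Wsum_bounds:
  assumes "lam \<ge> 0" "zz N \<in> Wset C N"
  shows "1 \<le> (\<Sum>x\<in>Wset C N. wt lam h w x)"
    "(\<Sum>x\<in>Wset C N. wt lam h w x) \<le> 2^N * exp (2 * lam * (\<Sum>n = 1..N. \<bar>w n + h\<bar>))"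
proof -
  have "wt lam h w (zz N) \<le> (\<Sum>x\<in>Wset C N. wt lam h w x)"
    by (rule member_le_sum[OF assms(2)]) (auto simp: less_imp_le wt_pos Wset_finite)
  thus "1 \<le> (\<Sum>x\<in>Wset C N. wt lam h w x)" by (simp add: zz_wt)
  have "(\<Sum>x\<in>Wset C N. wt lam h w x) \<le> of_nat (card (Wset C N)) * exp (2 * lam * (\<Sum>n = 1..N. \<bar>w n + h\<bar>))"
    by (rule sum_bounded_above) (use wt_upper[OF assms(1)] in \<open>auto simp: Wset_def srw_paths_def\<close>)
  also have "\<dots> \<le> 2^N * exp (2 * lam * (\<Sum>n = 1..N. \<bar>w n + h\<bar>))"
  proof -
    have "card (Wset C N) \<le> card (srw_paths N)"
      by (rule card_mono[OF srw_paths_finite]) (auto simp: Wset_def)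
    hence "real (card (Wset C N)) \<le> 2^N" using card_paths[of N]
      by (metis of_nat_le_iff of_nat_numeral of_nat_power)
    thus ?thesis by (intro mult_right_mono) auto
  qed
  finally show "(\<Sum>x\<in>Wset C N. wt lam h w x) \<le> 2^N * exp (2 * lam * (\<Sum>n = 1..N. \<bar>w n + h\<bar>))" .
qed

lemma Z_pinned_W: "Z_pinned lam h w N = (\<Sum>x\<in>Wset {} N. wt lam h w x) / 2^N"
proof -
  have "{xs \<in> srw_paths N. srw_pos xs N = 0} = Wset {} N" unfolding Wset_def by auto
  moreover have "copolymer_weight lam h w N x = wt lam h w x" if "x \<in> Wset {} N" for x
    using that unfolding copolymer_weight_def wt_def en_def Wset_def srw_paths_def by simp
  ultimately show ?thesis unfolding Z_pinned_def by simp
qed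

lemma Z_hat_W: "Z_hat t lam h w N = (\<Sum>x\<in>Wset (t ` {1..zeta t N}) N. wt lam h w x) / 2^N"
proof -
  have "{xs \<in> srw_paths N. (\<forall>k\<in>{1..zeta t N}. srw_pos xs (t k) = 0) \<and> srw_pos xs N = 0}
      = Wset (t ` {1..zeta t N}) N" unfolding Wset_def by auto
  moreover have "copolymer_weight lam h w N x = wt lam h w x" if "x \<in> Wset (t ` {1..zeta t N}) N" for x
    using that unfolding copolymer_weight_def wt_def en_def Wset_def srw_paths_def by simp
  ultimately show ?thesis unfolding Z_hat_def by simp
qed

lemma zeta_props:
  assumes "strict_mono t" "t 0 = 0"
  shows "t (zeta t N) \<le> N" "k \<le> zeta t N \<Longrightarrow> t k \<le> N"
proof -
  have fin: "finite {k. t k \<le> N}"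
  proof -
    have "{k. t k \<le> N} \<subseteq> {..N}" using strict_mono_imp_increasing[OF assms(1)] by (auto intro: order_trans)
    thus ?thesis by (rule finite_subset) simp
  qed
  have ne: "0 \<in> {k. t k \<le> N}" using assms by simp
  have "zeta t N \<in> {k. t k \<le> N}" unfolding zeta_def using fin ne by (intro Max_in) auto
  thus "t (zeta t N) \<le> N" by simp
  show "k \<le> zeta t N \<Longrightarrow> t k \<le> N"
    using \<open>t (zeta t N) \<le> N\<close> strict_mono_mono[OF assms(1)] by (meson monoD order_trans)
qed

lemma iteration:
  assumes "strict_mono t" "t 0 = 0" "\<And>i. even (t i)" "k \<le> zeta t N"
  shows "(\<Sum>x\<in>Wset {} N. wt lam h w x)
     \<le> exp (\<Sum>i = 1..k. ln (1 + 2 * real (t i - t (i - 1))^2)) * (\<Sum>x\<in>Wset (t ` {1..k}) N. wt lam h w x)"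
  using assms(4)
proof (induction k)
  case 0 thus ?case by simp
next
  case (Suc k)
  have mono: "mono t" using strict_mono_mono[OF assms(1)] .
  have ins: "(\<Sum>x\<in>Wset (t ` {1..k}) N. wt lam h w x)
      \<le> (1 + 2 * real (t (Suc k) - t k)^2) * (\<Sum>x\<in>Wset (insert (t (Suc k)) (t ` {1..k})) N. wt lam h w x)"
  proof (rule insertion)
    show "t k < t (Suc k)" using assms(1) by (simp add: strict_mono_def)
    show "t (Suc k) \<le> N" using zeta_props(2)[OF assms(1,2) Suc.prems] .
    show "even (t (Suc k))" by fact
    show "\<forall>c\<in>t ` {1..k}. c \<le> t k" using mono by (auto simp: monoD)
    show "\<forall>x\<in>Wset (t ` {1..k}) N. srw_pos x (t k) = 0"
    proof (cases k)
      case 0 thus ?thesis using assms(2) by simp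
    next
      case (Suc k') thus ?thesis unfolding Wset_def by auto
    qed
  qed
  have ins_eq: "insert (t (Suc k)) (t ` {1..k}) = t ` {1..Suc k}"
    by (auto simp: atLeastAtMostSuc_conv)
  have pos: "0 \<le> exp (\<Sum>i = 1..k. ln (1 + 2 * real (t i - t (i - 1))^2))" by simp
  have "(\<Sum>x\<in>Wset {} N. wt lam h w x)
     \<le> exp (\<Sum>i = 1..k. ln (1 + 2 * real (t i - t (i - 1))^2)) * (\<Sum>x\<in>Wset (t ` {1..k}) N. wt lam h w x)"
    using Suc by simp
  also have "\<dots> \<le> exp (\<Sum>i = 1..k. ln (1 + 2 * real (t i - t (i - 1))^2))
      * ((1 + 2 * real (t (Suc k) - t k)^2) * (\<Sum>x\<in>Wset (t ` {1..Suc k}) N. wt lam h w x))"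
    using ins ins_eq pos by (intro mult_left_mono) auto
  also have "\<dots> = exp (\<Sum>i = 1..Suc k. ln (1 + 2 * real (t i - t (i - 1))^2)) * (\<Sum>x\<in>Wset (t ` {1..Suc k}) N. wt lam h w x)"
  proof -
    have "exp (\<Sum>i = 1..Suc k. ln (1 + 2 * real (t i - t (i - 1))^2))
       = exp (\<Sum>i = 1..k. ln (1 + 2 * real (t i - t (i - 1))^2)) * exp (ln (1 + 2 * real (t (Suc k) - t k)^2))"
      by (simp add: exp_add)
    also have "exp (ln (1 + 2 * real (t (Suc k) - t k)^2)) = 1 + 2 * real (t (Suc k) - t k)^2"
      by (intro exp_ln) (simp add: add_pos_nonneg)
    finally show ?thesis by (simp add: mult.assoc)
  qed
  finally show ?case .
qed

definition Err :: "(nat \<Rightarrow> nat) \<Rightarrow> nat \<Rightarrow> real" where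
  "Err t N = (\<Sum>i = 1..zeta t N. ln (1 + 2 * real (t i - t (i - 1))^2))"

lemma Err_nonneg: "0 \<le> Err t N"
  unfolding Err_def by (intro sum_nonneg) simp

theorem det_bounds:
  assumes t: "strict_mono t" "t 0 = 0" "\<And>i. even (t i)" and N: "even N" and lam: "lam \<ge> 0"
  shows "0 < Z_hat t lam h w N"
    "Z_hat t lam h w N \<le> Z_pinned lam h w N"
    "ln (Z_pinned lam h w N) \<le> ln (Z_hat t lam h w N) + Err t N"
    "- (real N * ln 2) \<le> ln (Z_hat t lam h w N)"
    "ln (Z_hat t lam h w N) \<le> 2 * lam * (\<Sum>n = 1..N. \<bar>w n + h\<bar>)"
proof -
  define C where "C = t ` {1..zeta t N}"
  define WC where "WC = (\<Sum>x\<in>Wset C N. wt lam h w x)"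
  define W0 where "W0 = (\<Sum>x\<in>Wset {} N. wt lam h w x)"
  have zC: "zz N \<in> Wset C N"
    using zeta_props(2)[OF t(1,2)] t(3) N unfolding C_def by (intro zz_Wset) auto
  have z0: "zz N \<in> Wset {} N" using N by (intro zz_Wset) auto
  have WC1: "1 \<le> WC" "WC \<le> 2^N * exp (2 * lam * (\<Sum>n = 1..N. \<bar>w n + h\<bar>))"
    unfolding WC_def using Wsum_bounds[OF lam zC] by auto
  have W01: "1 \<le> W0" unfolding W0_def using Wsum_bounds[OF lam z0] by auto
  have Zh: "Z_hat t lam h w N = WC / 2^N" unfolding WC_def C_def by (rule Z_hat_W)
  have Zp: "Z_pinned lam h w N = W0 / 2^N" unfolding W0_def by (rule Z_pinned_W)
  show pos: "0 < Z_hat t lam h w N" unfolding Zh using WC1 by simp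
  have "WC \<le> W0" unfolding WC_def W0_def
    by (intro sum_mono2 Wset_finite) (auto simp: Wset_def less_imp_le wt_pos)
  thus "Z_hat t lam h w N \<le> Z_pinned lam h w N" unfolding Zh Zp by (simp add: divide_right_mono)
  have "W0 \<le> exp (Err t N) * WC" unfolding W0_def WC_def Err_def C_def
    by (rule iteration[OF t order_refl])
  hence "Z_pinned lam h w N \<le> exp (Err t N) * Z_hat t lam h w N" unfolding Zh Zp
    by (simp add: divide_right_mono)
  hence "ln (Z_pinned lam h w N) \<le> ln (exp (Err t N) * Z_hat t lam h w N)"
    using W01 by (intro ln_mono) (auto simp: Zp)
  also have "\<dots> = Err t N + ln (Z_hat t lam h w N)" using pos by (simp add: ln_mult)
  finally show "ln (Z_pinned lam h w N) \<le> ln (Z_hat t lam h w N) + Err t N" by simp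
  have "ln (1 / 2^N) \<le> ln (Z_hat t lam h w N)"
    using WC1 unfolding Zh by (intro ln_mono) (auto simp: divide_right_mono)
  moreover have "ln (1 / 2^N :: real) = - (real N * ln 2)" by (simp add: ln_div ln_realpow)
  ultimately show "- (real N * ln 2) \<le> ln (Z_hat t lam h w N)" by simp
  have "Z_hat t lam h w N \<le> exp (2 * lam * (\<Sum>n = 1..N. \<bar>w n + h\<bar>))"
    using WC1 unfolding Zh by (simp add: divide_le_eq mult.commute)
  hence "ln (Z_hat t lam h w N) \<le> ln (exp (2 * lam * (\<Sum>n = 1..N. \<bar>w n + h\<bar>)))"
    using pos by (intro ln_mono) auto
  thus "ln (Z_hat t lam h w N) \<le> 2 * lam * (\<Sum>n = 1..N. \<bar>w n + h\<bar>)" by simp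
qed

lemma log_bound:
  fixes d g :: real
  assumes "0 < d" "d \<le> 2" "0 \<le> g"
  shows "ln (1 + 2 * g^2) \<le> ln (8 / d^2) + d * g"
proof -
  have e1: "1 + d * g / 2 \<le> exp (d * g / 2)" using exp_ge_add_one_self[of "d*g/2"] by simp
  have e0: "0 \<le> 1 + d * g / 2" using assms by simp
  have "(1 + d * g / 2)^2 \<le> (exp (d * g / 2))^2" using e1 e0 by (rule power_mono)
  also have "(exp (d * g / 2))^2 = exp (d * g)" by (simp add: power2_eq_square exp_add[symmetric])
  finally have "(1 + d * g / 2)^2 \<le> exp (d * g)" .
  moreover have "1 + (d * g)^2 / 4 \<le> (1 + d * g / 2)^2"
    using assms by (simp add: power2_eq_square algebra_simps)
  ultimately have A: "1 + (d * g)^2 / 4 \<le> exp (d * g)" by linarith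
  have d2: "d^2 \<le> 4" using assms power_mono[of d 2 2] by simp
  have d2p: "0 < d^2" using assms by simp
  have "1 + 2 * g^2 \<le> 8 / d^2 + 2 * g^2"
  proof -
    have "1 \<le> 8 / d^2" using d2 d2p by (simp add: field_simps)
    thus ?thesis by simp
  qed
  also have "8 / d^2 + 2 * g^2 = (8 / d^2) * (1 + (d * g)^2 / 4)"
    using assms(1) by (simp add: field_simps power2_eq_square)
  also have "\<dots> \<le> (8 / d^2) * exp (d * g)" using A d2p by (intro mult_left_mono) auto
  finally have "1 + 2 * g^2 \<le> (8 / d^2) * exp (d * g)" .
  hence "ln (1 + 2 * g^2) \<le> ln ((8 / d^2) * exp (d * g))"
    by (intro ln_mono) (auto simp: add_pos_nonneg)
  also have "\<dots> = ln (8 / d^2) + d * g"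
    by (simp only: ln_mult) (use assms(1) in simp)
  finally show ?thesis .
qed

lemma telesc:
  assumes "mono (t :: nat \<Rightarrow> nat)"
  shows "(\<Sum>i = 1..k. real (t i - t (i - 1))) = real (t k) - real (t 0)"
proof (induction k)
  case (Suc k)
  have "t k \<le> t (Suc k)" using assms by (simp add: monoD)
  thus ?case using Suc by (simp add: of_nat_diff)
qed simp

lemma Err_bound:
  assumes t: "strict_mono t" "t 0 = 0" and d: "0 < d" "d \<le> 2"
  shows "Err t N \<le> real (zeta t N) * ln (8 / d^2) + d * real N"
proof -
  have "Err t N \<le> (\<Sum>i = 1..zeta t N. ln (8 / d^2) + d * real (t i - t (i - 1)))"
    unfolding Err_def by (intro sum_mono log_bound d) simp
  also have "\<dots> = real (zeta t N) * ln (8 / d^2) + d * (\<Sum>i = 1..zeta t N. real (t i - t (i - 1)))"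
    by (simp add: sum.distrib sum_distrib_left)
  also have "(\<Sum>i = 1..zeta t N. real (t i - t (i - 1))) = real (t (zeta t N))"
    using telesc[OF strict_mono_mono[OF t(1)]] t(2) by simp
  also have "d * real (t (zeta t N)) \<le> d * real N"
    using zeta_props(1)[OF t] d by (intro mult_left_mono) auto
  finally show ?thesis by simp
qed

lemma Err_lim:
  assumes t: "strict_mono t" "t 0 = 0" and z: "(\<lambda>N. real (zeta t N) / real N) \<longlonglongrightarrow> 0"
  shows "(\<lambda>N. Err t N / real N) \<longlonglongrightarrow> 0"
proof (rule LIMSEQ_I)
  fix r :: real assume r: "0 < r"
  define d where "d = min 2 (r/2)"
  have d: "0 < d" "d \<le> 2" "d \<le> r/2" using r unfolding d_def by auto
  define c where "c = ln (8 / d^2)"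
  have c: "0 \<le> c"
  proof -
    have "d^2 \<le> 4" using d power_mono[of d 2 2] by simp
    hence "1 \<le> 8 / d^2" using d by (simp add: field_simps)
    thus ?thesis unfolding c_def by simp
  qed
  have "0 < r / (2 * (c + 1))" using r c by simp
  from LIMSEQ_D[OF z this] obtain n0 where n0: "\<forall>n\<ge>n0. norm (real (zeta t n) / real n - 0) < r / (2 * (c + 1))"
    by blast
  show "\<exists>no. \<forall>n\<ge>no. norm (Err t n / real n - 0) < r"
  proof (intro exI allI impI)
    fix n assume n: "n \<ge> max n0 1"
    have npos: "0 < real n" using n by simp
    have zn: "real (zeta t n) / real n < r / (2 * (c + 1))" using n0 n by auto
    have "Err t n / real n \<le> (real (zeta t n) * c + d * real n) / real n"
      using Err_bound[OF t d(1,2), of n] npos unfolding c_def by (simp add: divide_right_mono)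
    also have "\<dots> = (real (zeta t n) / real n) * c + d" using npos by (simp add: field_simps)
    also have "\<dots> \<le> (r / (2 * (c + 1))) * c + d" using zn c by (intro add_right_mono mult_right_mono) auto
    also have "\<dots> < r"
    proof -
      have "(r / (2 * (c + 1))) * c < r / 2" using r c by (simp add: field_simps)
      thus ?thesis using d by linarith
    qed
    finally have "Err t n / real n < r" .
    moreover have "0 \<le> Err t n / real n" using Err_nonneg npos by simp
    ultimately show "norm (Err t n / real n - 0) < r" by simp
  qed
qed

lemma meas_Zhat:
  assumes "\<And>n. n \<ge> 1 \<Longrightarrow> (\<lambda>x. \<omega> x n) \<in> borel_measurable M"
  shows "(\<lambda>x. Z_hat t lam h (\<omega> x) N) \<in> borel_measurable M"
  unfolding Z_hat_def copolymer_weight_def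
  apply (intro borel_measurable_divide borel_measurable_sum borel_measurable_const)
  apply (rule measurable_compose[OF _ borel_measurable_exp])
  apply (intro borel_measurable_times borel_measurable_const borel_measurable_sum borel_measurable_add assms)
  apply auto
  done

lemma abs_le_exps: "\<bar>y::real\<bar> \<le> exp y + exp (- y)"
proof -
  have "1 + y \<le> exp y" "1 + - y \<le> exp (- y)" by (rule exp_ge_add_one_self)+
  moreover have "0 < exp y" "0 < exp (-y)" by simp_all
  ultimately show ?thesis by linarith
qed

lemma sq_le_exps: "(y::real)^2 \<le> 4 * (exp y + exp (- y))"
proof -
  have key: "z^2 \<le> 4 * exp z" if "0 \<le> z" for z :: real
  proof -
    have e1: "1 + z / 2 \<le> exp (z / 2)" by (rule exp_ge_add_one_self)
    have "(1 + z / 2)^2 \<le> (exp (z / 2))^2" using e1 that by (intro power_mono) auto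
    also have "(exp (z / 2))^2 = exp z" by (simp add: power2_eq_square exp_add[symmetric])
    finally have "(1 + z/2)^2 \<le> exp z" .
    moreover have "z^2 / 4 \<le> (1 + z/2)^2" using that by (simp add: power2_eq_square algebra_simps)
    ultimately show ?thesis by linarith
  qed
  show ?thesis
  proof (cases "0 \<le> y")
    case True
    have "y^2 \<le> 4 * exp y" by (rule key[OF True])
    moreover have "0 < exp (-y)" by simp
    ultimately show ?thesis unfolding distrib_left by linarith
  next
    case False
    have "(-y)^2 \<le> 4 * exp (-y)" by (rule key) (use False in simp)
    moreover have "0 < exp y" by simp
    ultimately show ?thesis unfolding distrib_left by (simp add: add_pos_nonneg) (smt (verit) exp_gt_zero)
  qed
qed

context prob_space
begin

lemma transfer_int:
  assumes X: "X \<in> borel_measurable M" "Y \<in> borel_measurable M" "distr M borel X = distr M borel Y"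
    and f: "(f :: real \<Rightarrow> real) \<in> borel_measurable borel"
  shows "integrable M (\<lambda>x. f (X x)) = integrable M (\<lambda>x. f (Y x))"
    "(\<integral>x. f (X x) \<partial>M) = (\<integral>x. f (Y x) \<partial>M)"
proof -
  show "integrable M (\<lambda>x. f (X x)) = integrable M (\<lambda>x. f (Y x))"
    using integrable_distr_eq[OF X(1) f] integrable_distr_eq[OF X(2) f] X(3) by simp
  show "(\<integral>x. f (X x) \<partial>M) = (\<integral>x. f (Y x) \<partial>M)"
    using integral_distr[OF X(1) f] integral_distr[OF X(2) f] X(3) by simp
qed

lemma omega_moments:
  fixes \<omega> :: "'a \<Rightarrow> nat \<Rightarrow> real"
  assumes meas: "\<And>n. n \<ge> 1 \<Longrightarrow> (\<lambda>x. \<omega> x n) \<in> borel_measurable M"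
    and ident: "\<And>n. n \<ge> 1 \<Longrightarrow> distr M borel (\<lambda>x. \<omega> x n) = distr M borel (\<lambda>x. \<omega> x 1)"
    and expmom: "\<And>\<alpha>::real. integrable M (\<lambda>x. exp (\<alpha> * \<omega> x 1))"
    and var: "expectation (\<lambda>x. (\<omega> x 1)^2) = 1"
    and n: "n \<ge> 1"
  shows "integrable M (\<lambda>x. \<omega> x n)" "integrable M (\<lambda>x. (\<omega> x n)^2)" "expectation (\<lambda>x. (\<omega> x n)^2) = 1"
proof -
  have m1: "(\<lambda>x. \<omega> x 1) \<in> borel_measurable M" by (rule meas) simp
  have ee: "integrable M (\<lambda>x. exp (\<omega> x 1) + exp (- \<omega> x 1))"
    using expmom[of 1] expmom[of "-1"] by (intro Bochner_Integration.integrable_add) simp_all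
  have i1: "integrable M (\<lambda>x. \<omega> x 1)"
  proof (rule Bochner_Integration.integrable_bound[OF ee m1])
    show "AE x in M. norm (\<omega> x 1) \<le> norm (exp (\<omega> x 1) + exp (- \<omega> x 1))"
      using abs_le_exps by (intro AE_I2) (simp add: add_pos_pos)
  qed
  have i2: "integrable M (\<lambda>x. (\<omega> x 1)^2)"
  proof (rule Bochner_Integration.integrable_bound)
    show "integrable M (\<lambda>x. 4 * (exp (\<omega> x 1) + exp (- \<omega> x 1)))"
      using ee by (rule integrable_mult_right)
    show "(\<lambda>x. (\<omega> x 1)^2) \<in> borel_measurable M" using m1 by measurable
    show "AE x in M. norm ((\<omega> x 1)^2) \<le> norm (4 * (exp (\<omega> x 1) + exp (- \<omega> x 1)))"
      using sq_le_exps by (intro AE_I2) (simp add: add_pos_pos)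
  qed
  note T = transfer_int[OF meas[OF n] m1 ident[OF n]]
  show "integrable M (\<lambda>x. \<omega> x n)" using T(1)[of "\<lambda>y. y"] i1 by simp
  show "integrable M (\<lambda>x. (\<omega> x n)^2)" using T(1)[of "\<lambda>y. y^2"] i2 by simp
  show "expectation (\<lambda>x. (\<omega> x n)^2) = 1" using T(2)[of "\<lambda>y. y^2"] var by simp
qed

end

theorem lemmaB1:
  fixes M :: "'a measure" and \<omega> :: "'a \<Rightarrow> nat \<Rightarrow> real"
    and t :: "nat \<Rightarrow> nat" and lam h F :: real
  assumes "prob_space M"
    and indep: "prob_space.indep_vars M (\<lambda>_. borel) (\<lambda>n x. \<omega> x n) {1..}"
    and ident: "\<And>n. n \<ge> 1 \<Longrightarrow> distr M borel (\<lambda>x. \<omega> x n) = distr M borel (\<lambda>x. \<omega> x 1)"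
    and expmom: "\<And>\<alpha>::real. integrable M (\<lambda>x. exp (\<alpha> * \<omega> x 1))"
    and mean: "prob_space.expectation M (\<lambda>x. \<omega> x 1) = 0"
    and var: "prob_space.expectation M (\<lambda>x. (\<omega> x 1)^2) = 1"
    and t0: "t 0 = 0" and tmono: "strict_mono t" and teven: "\<And>i. even (t i)"
    and zeta_lim: "(\<lambda>N. real (zeta t N) / real N) \<longlonglongrightarrow> 0"
    and lam: "lam \<ge> 0" and h: "h \<ge> 0"
    and free_energy: "AE x in M.
          (\<lambda>k. ln (Z_pinned lam h (\<omega> x) (2 * k)) / real (2 * k)) \<longlonglongrightarrow> F"
  shows "(AE x in M.
          (\<lambda>k. ln (Z_hat t lam h (\<omega> x) (2 * k)) / real (2 * k)) \<longlonglongrightarrow> F)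
       \<and> (\<forall>k. integrable M (\<lambda>x. ln (Z_hat t lam h (\<omega> x) (2 * k)) / real (2 * k)))
       \<and> ((\<lambda>k. \<integral>x. \<bar>ln (Z_hat t lam h (\<omega> x) (2 * k)) / real (2 * k) - F\<bar> \<partial>M) \<longlonglongrightarrow> 0)"
proof -
  interpret P: prob_space M by fact
  have meas: "(\<lambda>x. \<omega> x n) \<in> borel_measurable M" if "n \<ge> 1" for n
    using indep that unfolding P.indep_vars_def by auto
  note mom = P.omega_moments[of \<omega>, OF meas ident expmom var]
  define Lh where "Lh k x = ln (Z_hat t lam h (\<omega> x) (2 * k)) / real (2 * k)" for k x
  define Lp where "Lp k x = ln (Z_pinned lam h (\<omega> x) (2 * k)) / real (2 * k)" for k x
  define Er where "Er k = Err t (2 * k) / real (2 * k)" for k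
  define A where "A k x = (\<Sum>n = 1..2*k. \<bar>\<omega> x n\<bar>)" for k x
  have Er_lim: "Er \<longlonglongrightarrow> 0"
  proof -
    have sm: "strict_mono (\<lambda>k::nat. 2 * k)" by (rule strict_monoI) simp
    from LIMSEQ_subseq_LIMSEQ[OF Err_lim[OF tmono t0 zeta_lim] sm]
    show ?thesis unfolding Er_def comp_def .
  qed
  have measLh: "Lh k \<in> borel_measurable M" for k
    unfolding Lh_def by (intro borel_measurable_divide borel_measurable_ln meas_Zhat meas
        borel_measurable_const)
  have detk: "Lh k x \<le> Lp k x \<and> Lp k x \<le> Lh k x + Er k \<and>
      \<bar>Lh k x\<bar> \<le> ln 2 + 2 * lam * h + 2 * lam * (A k x / real (2 * k))" if k: "k \<ge> 1" for k x
  proof -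
    have ev: "even (2 * k)" by simp
    note D = det_bounds[OF tmono t0 teven ev lam, of h "\<omega> x"]
    have Np: "0 < real (2 * k)" using k by simp
    have Zp: "0 < Z_pinned lam h (\<omega> x) (2 * k)" using D(1,2) by linarith
    have l1: "ln (Z_hat t lam h (\<omega> x) (2 * k)) \<le> ln (Z_pinned lam h (\<omega> x) (2 * k))"
      using D(1,2) by (intro ln_mono) auto
    have s1: "Lh k x \<le> Lp k x" unfolding Lh_def Lp_def using l1 Np by (intro divide_right_mono) auto
    have s2: "Lp k x \<le> Lh k x + Er k" unfolding Lh_def Lp_def Er_def
      using D(3) Np by (simp add: add_divide_distrib[symmetric] divide_right_mono)
    have sumb: "(\<Sum>n = 1..2*k. \<bar>\<omega> x n + h\<bar>) \<le> A k x + real (2 * k) * h"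
    proof -
      have "(\<Sum>n = 1..2*k. \<bar>\<omega> x n + h\<bar>) \<le> (\<Sum>n = 1..2*k. \<bar>\<omega> x n\<bar> + h)"
        using h by (intro sum_mono) (simp add: abs_triangle_ineq[THEN order_trans])
      also have "\<dots> = A k x + real (2 * k) * h" unfolding A_def by (simp add: sum.distrib)
      finally show ?thesis .
    qed
    have A0: "0 \<le> A k x" unfolding A_def by (intro sum_nonneg) simp
    have up: "ln (Z_hat t lam h (\<omega> x) (2 * k)) \<le> 2 * lam * (A k x + real (2 * k) * h)"
      using D(5) sumb lam by (meson mult_left_mono order_trans zero_le_mult_iff zero_le_numeral)
    have "\<bar>ln (Z_hat t lam h (\<omega> x) (2 * k))\<bar> \<le> real (2 * k) * ln 2 + 2 * lam * h * real (2 * k) + 2 * lam * A k x"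
    proof -
      have "0 \<le> real (2 * k) * ln 2" by simp
      moreover have "0 \<le> 2 * lam * h * real (2 * k)" using lam h by simp
      moreover have "0 \<le> 2 * lam * A k x" using lam A0 by simp
      moreover have "2 * lam * (A k x + real (2 * k) * h) = 2 * lam * h * real (2 * k) + 2 * lam * A k x"
        by (simp add: algebra_simps)
      ultimately show ?thesis unfolding abs_le_iff using up D(4) by linarith
    qed
    hence "\<bar>Lh k x\<bar> \<le> (real (2 * k) * ln 2 + 2 * lam * h * real (2 * k) + 2 * lam * A k x) / real (2 * k)"
      unfolding Lh_def using Np by (simp add: abs_div divide_right_mono)
    also have "\<dots> = ln 2 + 2 * lam * h + 2 * lam * (A k x / real (2 * k))"
      using Np by (simp add: field_simps)
    finally show ?thesis using s1 s2 by simp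
  qed
  have intA: "integrable M (A k)" for k
    unfolding A_def by (intro Bochner_Integration.integrable_sum Bochner_Integration.integrable_abs mom(1)) auto
  have AE1: "AE x in M. (\<lambda>k. Lh k x) \<longlonglongrightarrow> F"
    using free_energy
  proof eventually_elim
    case (elim x)
    hence Lp_lim: "(\<lambda>k. Lp k x) \<longlonglongrightarrow> F" unfolding Lp_def .
    have low: "(\<lambda>k. Lp k x - Er k) \<longlonglongrightarrow> F - 0" by (intro tendsto_diff Lp_lim Er_lim)
    show ?case
    proof (rule tendsto_sandwich[OF _ _ low[simplified] Lp_lim])
      show "\<forall>\<^sub>F k in sequentially. Lp k x - Er k \<le> Lh k x"
        using eventually_ge_at_top[of 1]
      proof eventually_elim
        case (elim k)
        from detk[OF elim, of x] show ?case by linarith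
      qed
      show "\<forall>\<^sub>F k in sequentially. Lh k x \<le> Lp k x"
        using eventually_ge_at_top[of 1]
      proof eventually_elim
        case (elim k)
        from detk[OF elim, of x] show ?case by linarith
      qed
    qed
  qed
  have intLh: "integrable M (Lh k)" for k
  proof (cases "k = 0")
    case True
    have "Lh 0 = (\<lambda>x. 0)" by (rule ext) (simp add: Lh_def)
    thus ?thesis using True by simp
  next
    case False
    hence k: "k \<ge> 1" by simp
    show ?thesis
    proof (rule Bochner_Integration.integrable_bound[OF _ measLh])
      show "integrable M (\<lambda>x. ln 2 + 2 * lam * h + 2 * lam * (A k x / real (2 * k)))"
        using intA by (intro Bochner_Integration.integrable_add integrable_mult_right integrable_divide
            P.integrable_const) auto
      show "AE x in M. norm (Lh k x) \<le> norm (ln 2 + 2 * lam * h + 2 * lam * (A k x / real (2 * k)))"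
      proof (intro AE_I2)
        fix x
        have "0 \<le> ln 2 + 2 * lam * h + 2 * lam * (A k x / real (2 * k))"
          using lam h unfolding A_def by (intro add_nonneg_nonneg mult_nonneg_nonneg divide_nonneg_nonneg sum_nonneg) auto
        thus "norm (Lh k x) \<le> norm (ln 2 + 2 * lam * h + 2 * lam * (A k x / real (2 * k)))"
          using detk[OF k, of x] by simp
      qed
    qed
  qed
  define c0 where "c0 = ln 2 + 2 * lam * h + \<bar>F\<bar>"
  define K2 where "K2 = 2 * c0^2 + 8 * lam^2"
  define S where "S k x = (\<Sum>n = 1..2*k. (\<omega> x n)^2)" for k x
  define V where "V k x = 2 * c0^2 + (8 * lam^2 / real (2 * k)) * S k x" for k x
  have K2nn: "0 \<le> K2" unfolding K2_def by simp
  have intS: "integrable M (S k)" for k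
    unfolding S_def by (intro Bochner_Integration.integrable_sum mom(2)) auto
  have intSv: "(\<integral>x. S k x \<partial>M) = real (2 * k)" for k
  proof -
    have "(\<integral>x. S k x \<partial>M) = (\<Sum>n = 1..2*k. \<integral>x. (\<omega> x n)^2 \<partial>M)"
      unfolding S_def by (rule Bochner_Integration.integral_sum) (auto intro: mom(2))
    also have "\<dots> = (\<Sum>n = 1..2*k. 1)" by (intro sum.cong) (auto intro: mom(3))
    finally show ?thesis by simp
  qed
  have intV: "integrable M (V k)" for k
    unfolding V_def using intS by (intro Bochner_Integration.integrable_add integrable_mult_right P.integrable_const)
  have intVv: "(\<integral>x. V k x \<partial>M) = K2" if "k \<ge> 1" for k
  proof -
    have "(\<integral>x. V k x \<partial>M) = (\<integral>x. 2 * c0^2 \<partial>M) + (\<integral>x. (8 * lam^2 / real (2 * k)) * S k x \<partial>M)"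
      unfolding V_def using intS by (intro Bochner_Integration.integral_add integrable_mult_right P.integrable_const)
    also have "(\<integral>x. 2 * c0^2 \<partial>M) = 2 * c0^2" using P.prob_space by simp
    also have "(\<integral>x. (8 * lam^2 / real (2 * k)) * S k x \<partial>M) = (8 * lam^2 / real (2 * k)) * real (2 * k)"
      using intSv by simp
    also have "\<dots> = 8 * lam^2" using that by simp
    finally show ?thesis unfolding K2_def .
  qed
  have Ysq: "(Lh k x - F)^2 \<le> V k x" if k: "k \<ge> 1" for k x
  proof -
    define a where "a = A k x / real (2 * k)"
    have Np: "0 < real (2 * k)" using k by simp
    have a0: "0 \<le> a" unfolding a_def A_def using Np by (intro divide_nonneg_nonneg sum_nonneg) auto
    have Yb: "\<bar>Lh k x - F\<bar> \<le> c0 + 2 * lam * a"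
      using detk[OF k, of x] unfolding c0_def a_def by (simp add: abs_triangle_ineq4[THEN order_trans] abs_diff_le_iff) linarith
    have "(Lh k x - F)^2 = \<bar>Lh k x - F\<bar>^2" by simp
    also have "\<dots> \<le> (c0 + 2 * lam * a)^2" using Yb by (intro power_mono) auto
    also have "\<dots> \<le> 2 * c0^2 + 8 * lam^2 * a^2"
    proof -
      have "0 \<le> (c0 - 2 * lam * a)^2" by simp
      thus ?thesis by (simp add: power2_eq_square algebra_simps)
    qed
    also have "a^2 \<le> S k x / real (2 * k)"
    proof -
      have "(A k x)^2 \<le> (\<Sum>n = 1..2*k. \<bar>\<omega> x n\<bar>^2) * real (card {1..2*k})"
        unfolding A_def by (rule sum_squared_le_sum_of_squares)
      also have "\<dots> = S k x * real (2 * k)" unfolding S_def by simp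
      finally have "(A k x)^2 \<le> S k x * real (2 * k)" .
      hence "(A k x)^2 / (real (2 * k))^2 \<le> S k x * real (2 * k) / (real (2 * k))^2"
        by (intro divide_right_mono) auto
      thus ?thesis unfolding a_def using Np by (simp add: power_divide power2_eq_square)
    qed
    hence "2 * c0^2 + 8 * lam^2 * a^2 \<le> 2 * c0^2 + 8 * lam^2 * (S k x / real (2 * k))"
      by (intro add_left_mono mult_left_mono) auto
    also have "\<dots> = V k x" unfolding V_def by simp
    finally show ?thesis by simp
  qed
  have Vnn: "0 \<le> V k x" for k x
    unfolding V_def S_def by (intro add_nonneg_nonneg mult_nonneg_nonneg divide_nonneg_nonneg sum_nonneg) auto
  have pw: "\<bar>Lh k x - F\<bar> \<le> min \<bar>Lh k x - F\<bar> K + V k x / K" if k: "k \<ge> 1" and K: "K > 0" for k x K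
  proof (cases "\<bar>Lh k x - F\<bar> \<le> K")
    case True
    thus ?thesis using Vnn[of k x] K by simp
  next
    case False
    hence big: "K < \<bar>Lh k x - F\<bar>" by simp
    have "\<bar>Lh k x - F\<bar> * K \<le> \<bar>Lh k x - F\<bar> * \<bar>Lh k x - F\<bar>" using big K by (intro mult_left_mono) auto
    also have "\<dots> = (Lh k x - F)^2" by (simp add: power2_eq_square)
    also have "\<dots> \<le> V k x" by (rule Ysq[OF k])
    finally have "\<bar>Lh k x - F\<bar> \<le> V k x / K" using K by (simp add: field_simps)
    moreover have "min \<bar>Lh k x - F\<bar> K = K" using big by simp
    ultimately show ?thesis using K by linarith
  qed
  have L1: "(\<lambda>k. \<integral>x. \<bar>Lh k x - F\<bar> \<partial>M) \<longlonglongrightarrow> 0"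
  proof (rule LIMSEQ_I)
    fix r :: real assume r: "0 < r"
    define K where "K = 2 * K2 / r + 1"
    have K: "0 < K" unfolding K_def using K2nn r by (simp add: add_nonneg_pos)
    have DCT: "(\<lambda>k. \<integral>x. min \<bar>Lh k x - F\<bar> K \<partial>M) \<longlonglongrightarrow> (\<integral>x. 0 \<partial>M)"
    proof (rule integral_dominated_convergence[where w = "\<lambda>_. K"])
      show "(\<lambda>x. 0::real) \<in> borel_measurable M" by simp
      show "(\<lambda>x. min \<bar>Lh k x - F\<bar> K) \<in> borel_measurable M" for k
        using measLh[of k] by measurable
      show "integrable M (\<lambda>_. K)" by simp
      show "AE x in M. (\<lambda>k. min \<bar>Lh k x - F\<bar> K) \<longlonglongrightarrow> 0"
        using AE1
      proof eventually_elim
        case (elim x)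
        have "(\<lambda>k. min \<bar>Lh k x - F\<bar> K) \<longlonglongrightarrow> min \<bar>F - F\<bar> K"
          by (intro tendsto_min tendsto_rabs tendsto_diff elim tendsto_const)
        thus ?case using K by simp
      qed
      show "AE x in M. norm (min \<bar>Lh k x - F\<bar> K) \<le> K" for k
        using K by (intro AE_I2) auto
    qed
    hence "(\<lambda>k. \<integral>x. min \<bar>Lh k x - F\<bar> K \<partial>M) \<longlonglongrightarrow> 0" by simp
    from LIMSEQ_D[OF this, of "r/2"] r obtain n0 where
      n0: "\<forall>n\<ge>n0. norm ((\<integral>x. min \<bar>Lh n x - F\<bar> K \<partial>M) - 0) < r/2" by auto
    show "\<exists>no. \<forall>n\<ge>no. norm ((\<integral>x. \<bar>Lh n x - F\<bar> \<partial>M) - 0) < r"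
    proof (intro exI allI impI)
      fix n assume n: "n \<ge> max n0 1"
      hence n1: "n \<ge> 1" by simp
      have intm: "integrable M (\<lambda>x. min \<bar>Lh n x - F\<bar> K)"
      proof (rule Bochner_Integration.integrable_bound[where f = "\<lambda>_. K"])
        show "integrable M (\<lambda>_. K)" by simp
        show "(\<lambda>x. min \<bar>Lh n x - F\<bar> K) \<in> borel_measurable M" using measLh[of n] by measurable
        show "AE x in M. norm (min \<bar>Lh n x - F\<bar> K) \<le> norm K" using K by (intro AE_I2) auto
      qed
      have "(\<integral>x. \<bar>Lh n x - F\<bar> \<partial>M) \<le> (\<integral>x. min \<bar>Lh n x - F\<bar> K + V n x / K \<partial>M)"
      proof (rule integral_mono)
        show "integrable M (\<lambda>x. \<bar>Lh n x - F\<bar>)"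
          using intLh[of n] by (intro integrable_abs Bochner_Integration.integrable_diff P.integrable_const)
        show "integrable M (\<lambda>x. min \<bar>Lh n x - F\<bar> K + V n x / K)"
          using intm intV[of n] by (intro Bochner_Integration.integrable_add integrable_divide)
        show "\<bar>Lh n x - F\<bar> \<le> min \<bar>Lh n x - F\<bar> K + V n x / K" for x by (rule pw[OF n1 K])
      qed
      also have "\<dots> = (\<integral>x. min \<bar>Lh n x - F\<bar> K \<partial>M) + (\<integral>x. V n x \<partial>M) / K"
        using intm intV[of n] by (simp add: Bochner_Integration.integral_add integrable_divide)
      also have "(\<integral>x. V n x \<partial>M) = K2" by (rule intVv[OF n1])
      also have "(\<integral>x. min \<bar>Lh n x - F\<bar> K \<partial>M) < r/2" using n0 n by auto
      also have "K2 / K < r/2"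
      proof -
        have "K2 < r/2 * K" unfolding K_def using r K2nn by (simp add: field_simps)
        thus ?thesis using K by (simp add: field_simps)
      qed
      finally have lt: "(\<integral>x. \<bar>Lh n x - F\<bar> \<partial>M) < r" by simp
      have "0 \<le> (\<integral>x. \<bar>Lh n x - F\<bar> \<partial>M)" by (intro integral_nonneg_AE) auto
      thus "norm ((\<integral>x. \<bar>Lh n x - F\<bar> \<partial>M) - 0) < r" using lt by simp
    qed
  qed
  show ?thesis using AE1 intLh L1 unfolding Lh_def by auto
qed


end
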